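(* Let $\Delta$ be a $2$-connected simplicial graph of genus $g\ge 4$ in which every vertex has valency at least $3$. Then the girth of $\Delta$ is at most $\left\lfloor\frac{g+3}{2}\right\rfloor$, except for at most three graphs (up to isomorphism).
   Context: A simplicial graph is a finite $1$-dimensional simplicial complex (a finite simple graph); it is $2$-connected if it is connected, has at least $3$ vertices, and remains connected after deleting any vertex. The genus is $g=1-v+e$ where $v$, $e$ are the numbers of vertices and edges. The girth is the length of a shortest cycle. *)

theory Defs
  imports Main
begin

definition simple_graph :: "'a set \<Rightarrow> 'a set set \<Rightarrow> bool" where
  "simple_graph V E \<longleftrightarrow> finite V \<and>
     (\<forall>e\<in>E. \<exists>u v. e = {u, v} \<and> u \<in> V \<and> v \<in> V \<and> u \<noteq> v)"

definition adj_rel :: "'a set \<Rightarrow> 'a set set \<Rightarrow> ('a \<times> 'a) set" where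
  "adj_rel V E = {(x, y). x \<in> V \<and> y \<in> V \<and> {x, y} \<in> E}"

definition connected_graph :: "'a set \<Rightarrow> 'a set set \<Rightarrow> bool" where
  "connected_graph V E \<longleftrightarrow> V \<noteq> {} \<and> (\<forall>u\<in>V. \<forall>v\<in>V. (u, v) \<in> (adj_rel V E)\<^sup>*)"

definition delete_vertex :: "'a set \<Rightarrow> 'a set set \<Rightarrow> 'a \<Rightarrow> 'a set \<times> 'a set set" where
  "delete_vertex V E w = (V - {w}, {e \<in> E. w \<notin> e})"

definition two_connected :: "'a set \<Rightarrow> 'a set set \<Rightarrow> bool" where
  "two_connected V E \<longleftrightarrow> connected_graph V E \<and> card V \<ge> 3 \<and>
     (\<forall>w\<in>V. connected_graph (fst (delete_vertex V E w)) (snd (delete_vertex V E w)))"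

definition degree :: "'a set \<Rightarrow> 'a set set \<Rightarrow> 'a \<Rightarrow> nat" where
  "degree V E u = card {v \<in> V. {u, v} \<in> E}"

definition genus :: "'a set \<Rightarrow> 'a set set \<Rightarrow> int" where
  "genus V E = 1 - int (card V) + int (card E)"

definition is_cycle :: "'a set \<Rightarrow> 'a set set \<Rightarrow> 'a list \<Rightarrow> bool" where
  "is_cycle V E cs \<longleftrightarrow> length cs \<ge> 3 \<and> distinct cs \<and> set cs \<subseteq> V \<and>
     (\<forall>i < length cs. {cs ! i, cs ! ((i + 1) mod length cs)} \<in> E)"

definition girth :: "'a set \<Rightarrow> 'a set set \<Rightarrow> nat" where
  "girth V E = (LEAST k. \<exists>cs. is_cycle V E cs \<and> length cs = k)"

definition graph_iso :: "'a set \<Rightarrow> 'a set set \<Rightarrow> 'b set \<Rightarrow> 'b set set \<Rightarrow> bool" where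
  "graph_iso V1 E1 V2 E2 \<longleftrightarrow> (\<exists>f. bij_betw f V1 V2 \<and>
     (\<forall>u\<in>V1. \<forall>v\<in>V1. {u, v} \<in> E1 \<longleftrightarrow> {f u, f v} \<in> E2))"

end

theory Submission
  imports Defs
begin

fun nbw :: "'a set set \<Rightarrow> 'a list \<Rightarrow> bool" where
  "nbw E [] = True"
| "nbw E [a] = True"
| "nbw E [a,b] = ({a,b} \<in> E)"
| "nbw E (a#b#c#r) = ({a,b} \<in> E \<and> a \<noteq> c \<and> nbw E (b#c#r))"

lemma nbw_Cons: "nbw E (a#p) \<longleftrightarrow> nbw E p \<and> (p \<noteq> [] \<longrightarrow> {a, p!0} \<in> E) \<and> (Suc 0 < length p \<longrightarrow> a \<noteq> p!1)"
  by (cases p; cases "tl p") auto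

lemma nbw_tl: "nbw E (a#p) \<Longrightarrow> nbw E p"
  by (simp add: nbw_Cons)

lemma all_nat_split: "(\<forall>i::nat. Q i) \<longleftrightarrow> Q 0 \<and> (\<forall>i. Q (Suc i))"
  by (metis not0_implies_Suc)

lemma nbw_idx:
  "nbw E p \<longleftrightarrow> (\<forall>i. Suc i < length p \<longrightarrow> {p!i, p!Suc i} \<in> E) \<and>
                 (\<forall>i. Suc (Suc i) < length p \<longrightarrow> p!Suc (Suc i) \<noteq> p!i)"
proof (induction p)
  case Nil then show ?case by simp
next
  case (Cons a p)
  show ?case
    apply (simp only: nbw_Cons Cons.IH)
    apply (rule iffI)
     apply (intro conjI allI impI)
      apply (case_tac i; force)
     apply (case_tac i; force)
    apply (elim conjE)
    apply (intro conjI allI impI)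
    subgoal for i by (drule spec[of _ "Suc i"], simp)
    subgoal for i by (drule spec[of _ "Suc i"], simp)
    subgoal by (drule spec[of _ 0], simp)
    subgoal by (drule spec[of _ 0], simp)
    done
qed

lemma nbw_glue: "nbw E (xs @ [a,b]) \<Longrightarrow> nbw E (a # b # ys) \<Longrightarrow> nbw E (xs @ a # b # ys)"
proof (induction xs)
  case Nil then show ?case by simp
next
  case (Cons z xs)
  show ?case
  proof (cases xs)
    case Nil then show ?thesis using Cons by simp
  next
    case (Cons w xs')
    with Cons.prems Cons.IH show ?thesis
      by (cases xs') (auto dest: nbw_tl)
  qed
qed

lemma nbw_rev: "nbw E (rev p) \<longleftrightarrow> nbw E p"
proof -
  have *: "nbw E (rev p)" if "nbw E p" for p :: "'a list"
  proof -
    let ?n = "length p"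
    have e: "{p!i, p!Suc i} \<in> E" if "Suc i < ?n" for i using \<open>nbw E p\<close> that by (simp add: nbw_idx)
    have d: "p!Suc (Suc i) \<noteq> p!i" if "Suc (Suc i) < ?n" for i using \<open>nbw E p\<close> that by (simp add: nbw_idx)
    show ?thesis unfolding nbw_idx
    proof (intro conjI allI impI)
      fix i assume "Suc i < length (rev p)"
      then have "Suc (?n - Suc (Suc i)) < ?n" by simp
      from e[OF this] show "{rev p ! i, rev p ! Suc i} \<in> E"
        using \<open>Suc i < length (rev p)\<close>
        by (simp add: rev_nth Suc_diff_Suc insert_commute)
    next
      fix i assume "Suc (Suc i) < length (rev p)"
      then have "Suc (Suc (?n - Suc (Suc (Suc i)))) < ?n" by simp
      from d[OF this] show "rev p ! Suc (Suc i) \<noteq> rev p ! i"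
        using \<open>Suc (Suc i) < length (rev p)\<close>
        by (simp add: rev_nth Suc_diff_Suc)
    qed
  qed
  show ?thesis using *[of p] *[of "rev p"] by auto
qed

lemma sg_edge: "simple_graph V E \<Longrightarrow> {u,w} \<in> E \<Longrightarrow> u \<in> V \<and> w \<in> V \<and> u \<noteq> w"
  unfolding simple_graph_def by (metis doubleton_eq_iff)

lemma nbw_repeat:
  assumes sg: "simple_graph V E" and nb: "nbw E p" and nd: "\<not> distinct p"
  shows "\<exists>cs. is_cycle V E cs \<and> length cs < length p"
proof -
  have eE: "{p!i, p!Suc i} \<in> E" if "Suc i < length p" for i using nb that by (simp add: nbw_idx)
  have dd: "p!Suc (Suc i) \<noteq> p!i" if "Suc (Suc i) < length p" for i using nb that by (simp add: nbw_idx)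
  define P where "P j \<longleftrightarrow> j < length p \<and> (\<exists>i<j. p!i = p!j)" for j
  from nd obtain i j where ij: "i < length p" "j < length p" "i \<noteq> j" "p!i = p!j"
    by (auto simp: distinct_conv_nth)
  have "\<exists>j. P j"
  proof (cases "i < j")
    case True then show ?thesis using ij unfolding P_def by blast
  next
    case False then show ?thesis using ij unfolding P_def by (rule_tac x=i in exI) (auto intro!: exI[of _ j])
  qed
  define j0 where "j0 = (LEAST j. P j)"
  have Pj0: "P j0" unfolding j0_def using \<open>\<exists>j. P j\<close> by (metis LeastI)
  have minj: "\<And>j. P j \<Longrightarrow> j0 \<le> j" unfolding j0_def by (simp add: Least_le)
  from Pj0 obtain i0 where i0: "i0 < j0" "p!i0 = p!j0" "j0 < length p" unfolding P_def by blast
  have mind: "p!a \<noteq> p!b" if "a < b" "b < j0" for a b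
  proof
    assume "p!a = p!b"
    then have "P b" using that i0 unfolding P_def by auto
    with minj[of b] that show False by simp
  qed
  define cs where "cs = take (j0 - i0) (drop i0 p)"
  have lcs: "length cs = j0 - i0" using i0 by (simp add: cs_def)
  have ncs: "cs ! t = p ! (i0 + t)" if "t < j0 - i0" for t using that i0 by (simp add: cs_def)
  have "j0 - i0 \<noteq> 1"
  proof
    assume "j0 - i0 = 1"
    then have "j0 = Suc i0" by simp
    with eE[of i0] i0 have "{p!i0} \<in> E" by simp
    with sg show False unfolding simple_graph_def by (metis doubleton_eq_iff singleton_insert_inj_eq)
  qed
  moreover have "j0 - i0 \<noteq> 2"
  proof
    assume "j0 - i0 = 2"
    then have "j0 = Suc (Suc i0)" by simp
    with dd[of i0] i0 show False by simp
  qed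
  ultimately have l3: "3 \<le> length cs" using lcs i0 by simp
  have dcs: "distinct cs"
    unfolding distinct_conv_nth
  proof (intro allI impI)
    fix a b assume "a < length cs" "b < length cs" "a \<noteq> b"
    then show "cs!a \<noteq> cs!b"
    proof (cases "a < b")
      case True then show ?thesis using mind[of "i0+a" "i0+b"] ncs[of a] ncs[of b] lcs \<open>b < length cs\<close> by simp
    next
      case False then have "b < a" using \<open>a \<noteq> b\<close> by simp
      then show ?thesis using mind[of "i0+b" "i0+a"] ncs[of a] ncs[of b] lcs \<open>a < length cs\<close> by (simp add: eq_commute)
    qed
  qed
  have scs: "set cs \<subseteq> V"
  proof
    fix v assume "v \<in> set cs"
    then obtain t where t: "t < length cs" "v = cs!t" by (auto simp: in_set_conv_nth)
    then have "v = p!(i0+t)" using ncs lcs by simp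
    moreover have "Suc (i0+t) < length p" using t lcs i0 by simp
    ultimately show "v \<in> V" using eE[of "i0+t"] sg_edge[OF sg] by blast
  qed
  have ecs: "{cs ! t, cs ! ((t + 1) mod length cs)} \<in> E" if "t < length cs" for t
  proof (cases "Suc t < length cs")
    case True
    then have "(t+1) mod length cs = Suc t" by simp
    then show ?thesis using eE[of "i0+t"] ncs[of t] ncs[of "Suc t"] True lcs i0 by simp
  next
    case False
    then have tt: "Suc t = length cs" using that by simp
    then have "(t+1) mod length cs = 0" by simp
    moreover have "Suc (i0 + t) = j0" using tt lcs i0 by simp
    ultimately show ?thesis using eE[of "i0+t"] ncs[of t] ncs[of 0] that lcs i0 by simp
  qed
  have "is_cycle V E cs" unfolding is_cycle_def using l3 dcs scs ecs by blast
  moreover have "length cs < length p" using lcs i0 by simp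
  ultimately show ?thesis by blast
qed

definition nocyc :: "'a set \<Rightarrow> 'a set set \<Rightarrow> nat \<Rightarrow> bool" where
  "nocyc V E L \<longleftrightarrow> (\<forall>cs. is_cycle V E cs \<longrightarrow> L < length cs)"

lemma nbw_closed:
  assumes "nbw E (u#q)" "nbw E (u#p)" "q \<noteq> []" "p \<noteq> []" "hd q \<noteq> hd p"
  shows "nbw E (rev q @ u # p)"
proof -
  obtain a q' where q: "q = a # q'" using assms by (cases q) auto
  obtain b p' where p: "p = b # p'" using assms by (cases p) auto
  have 1: "nbw E (rev q' @ [a, u])" using assms(1) nbw_rev[of E "u#a#q'"] q by simp
  have 2: "nbw E [a,u,b]" using assms q p by (auto simp: nbw_Cons insert_commute)
  have 3: "nbw E (rev q' @ [a, u, b])" using nbw_glue[OF 1, of "[b]"] 2 by simp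
  have 4: "nbw E ((rev q' @ [a]) @ [u, b])" using 3 by simp
  have "nbw E ((rev q' @ [a]) @ u # b # p')" using nbw_glue[OF 4, of p'] assms(2) p by simp
  then show ?thesis using q p by simp
qed

lemma nb_uniq:
  assumes sg: "simple_graph V E" and nc: "nocyc V E L"
  shows "nbw E p \<Longrightarrow> nbw E q \<Longrightarrow> p \<noteq> [] \<Longrightarrow> q \<noteq> [] \<Longrightarrow> hd p = hd q \<Longrightarrow> last p = last q
     \<Longrightarrow> length p + length q \<le> L + 2 \<Longrightarrow> p = q"
proof (induction p arbitrary: q)
  case Nil then show ?case by simp
next
  case (Cons u p)
  have rep: "False" if "nbw E w" "\<not> distinct w" "length w \<le> L + 1" for w
  proof -
    from nbw_repeat[OF sg that(1,2)] obtain cs where "is_cycle V E cs" "length cs < length w" by blast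
    with nc that(3) show False unfolding nocyc_def by fastforce
  qed
  obtain q' where q: "q = u # q'" using Cons.prems by (cases q) auto
  show ?case
  proof (cases "p = []")
    case True
    show ?thesis
    proof (rule ccontr)
      assume "u # p \<noteq> q"
      then have "q' \<noteq> []" using True q by simp
      then have "\<not> distinct q" using Cons.prems True q
        by (metis distinct.simps(2) last.simps last_in_set list.sel(1))
      then show False using rep[of q] Cons.prems True by simp
    qed
  next
    case pne: False
    show ?thesis
    proof (cases "q' = []")
      case True
      have "\<not> distinct (u#p)" using Cons.prems True q pne
        by (metis distinct.simps(2) last.simps last_in_set)
      then show ?thesis using rep[of "u#p"] Cons.prems True q by simp
    next
      case qne: False
      show ?thesis
      proof (cases "hd p = hd q'")
        case True
        have "p = q'"
          using Cons.IH[of q'] Cons.prems q pne qne True nbw_tl by fastforce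
        then show ?thesis using q by simp
      next
        case False
        have w: "nbw E (rev q' @ u # p)"
          using nbw_closed[of E u q' p] Cons.prems q pne qne False by simp
        have "\<not> distinct (rev q' @ u # p)"
          using Cons.prems q pne qne
          by (metis distinct_append hd_rev last_ConsR last_appendR last_in_set list.distinct(1) disjoint_iff hd_in_set set_rev)
        then show ?thesis using rep[OF w] Cons.prems q by simp
      qed
    qed
  qed
qed

definition nbN :: "'a set \<Rightarrow> 'a set set \<Rightarrow> 'a \<Rightarrow> 'a set" where
  "nbN V E u = {w \<in> V. {u,w} \<in> E}"

definition walks :: "'a set set \<Rightarrow> 'a \<Rightarrow> 'a set \<Rightarrow> nat \<Rightarrow> 'a list set" where
  "walks E x B n = {p. nbw E p \<and> length p = Suc n \<and> last p = x \<and> (0 < n \<longrightarrow> p ! (n - 1) \<notin> B)}"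

locale G =
  fixes V :: "'a set" and E :: "'a set set"
  assumes sg: "simple_graph V E"
  and md: "\<forall>u\<in>V. 3 \<le> degree V E u"
begin

lemma finV: "finite V" using sg by (simp add: simple_graph_def)

lemma finN: "finite (nbN V E u)" using finV by (simp add: nbN_def)

lemma cardN: "u \<in> V \<Longrightarrow> 3 \<le> card (nbN V E u)"
  using md by (simp add: nbN_def degree_def)

lemma walks_set: assumes "p \<in> walks E x B n" "x \<in> V" shows "set p \<subseteq> V"
proof
  fix v assume "v \<in> set p"
  then obtain t where t: "t < length p" "v = p!t" by (auto simp: in_set_conv_nth)
  have nb: "nbw E p" and lp: "length p = Suc n" and lx: "last p = x" using assms by (auto simp: walks_def)
  show "v \<in> V"
  proof (cases "Suc t < length p")
    case True
    then have "{p!t, p!Suc t} \<in> E" using nb by (simp add: nbw_idx)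
    then show ?thesis using sg_edge[OF sg] t by blast
  next
    case False
    then have "t = n" using t lp by simp
    then have "v = last p" using t lp by (metis diff_Suc_1 last_conv_nth list.size(3) nat.distinct(1))
    then show ?thesis using lx assms by simp
  qed
qed

lemma walks_fin: assumes "x \<in> V" shows "finite (walks E x B n)"
proof -
  have "walks E x B n \<subseteq> {p. set p \<subseteq> V \<and> length p = Suc n}" using walks_set assms
    by (auto simp: walks_def)
  moreover have "finite {p. set p \<subseteq> V \<and> length p = Suc n}"
    using finite_lists_length_eq[OF finV] by simp
  ultimately show ?thesis by (rule finite_subset)
qed

lemma walks0: "walks E x B 0 = {[x]}"
  by (auto simp: walks_def length_Suc_conv)

lemma walks1: "walks E x B (Suc 0) = (\<lambda>z. [z,x]) ` (nbN V E x - B)"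
proof
  show "walks E x B (Suc 0) \<subseteq> (\<lambda>z. [z,x]) ` (nbN V E x - B)"
  proof
    fix p assume "p \<in> walks E x B (Suc 0)"
    then obtain a b where p: "p = [a,b]" "{a,b} \<in> E" "b = x" "a \<notin> B"
      by (auto simp: walks_def length_Suc_conv)
    then show "p \<in> (\<lambda>z. [z,x]) ` (nbN V E x - B)"
      using sg_edge[OF sg p(2)] by (auto simp: nbN_def insert_commute)
  qed
next
  show "(\<lambda>z. [z,x]) ` (nbN V E x - B) \<subseteq> walks E x B (Suc 0)"
    by (auto simp: nbN_def walks_def insert_commute)
qed

lemma walks_step:
  assumes x: "x \<in> V"
  shows "2 * card (walks E x B (Suc n)) \<le> card (walks E x B (Suc (Suc n)))"
proof -
  let ?W = "walks E x B (Suc n)"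
  define F where "F p = (\<lambda>z. z # p) ` (nbN V E (hd p) - {p!1})" for p
  have sub: "(\<Union>p\<in>?W. F p) \<subseteq> walks E x B (Suc (Suc n))"
  proof
    fix w assume "w \<in> (\<Union>p\<in>?W. F p)"
    then obtain p z where p: "p \<in> ?W" and z: "z \<in> nbN V E (hd p)" "z \<noteq> p!1" and w: "w = z # p"
      unfolding F_def by blast
    have lp: "length p = Suc (Suc n)" using p by (simp add: walks_def)
    then obtain a b r where pr: "p = a # b # r"
      by (metis length_Suc_conv)
    have "nbw E w" using p z pr w by (auto simp: walks_def nbN_def insert_commute)
    moreover have "length w = Suc (Suc (Suc n))" "last w = x" "w ! (Suc n) \<notin> B"
      using p w pr by (auto simp: walks_def)
    ultimately show "w \<in> walks E x B (Suc (Suc n))" by (simp add: walks_def)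
  qed
  have fin: "finite ?W" using walks_fin[OF x] .
  have finF: "\<forall>p\<in>?W. finite (F p)" using finN by (simp add: F_def)
  have disj: "\<forall>p\<in>?W. \<forall>q\<in>?W. p \<noteq> q \<longrightarrow> F p \<inter> F q = {}" by (auto simp: F_def)
  have cF: "2 \<le> card (F p)" if "p \<in> ?W" for p
  proof -
    have "set p \<subseteq> V" using walks_set[OF that x] .
    moreover have "p \<noteq> []" using that by (auto simp: walks_def)
    ultimately have "hd p \<in> V" by auto
    then have "3 \<le> card (nbN V E (hd p))" by (rule cardN)
    then have "2 \<le> card (nbN V E (hd p) - {p!1})"
      using card_Diff_singleton_if[of "nbN V E (hd p)" "p!1"] finN by (auto split: if_splits)
    moreover have "inj (\<lambda>z. z # p)" by (auto simp: inj_def)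
    ultimately show ?thesis unfolding F_def by (simp add: card_image inj_on_def)
  qed
  have "card (\<Union>p\<in>?W. F p) = (\<Sum>p\<in>?W. card (F p))"
    by (rule card_UN_disjoint[OF fin finF disj])
  also have "\<dots> \<ge> (\<Sum>p\<in>?W. 2)" by (rule sum_mono) (use cF in auto)
  finally have "2 * card ?W \<le> card (\<Union>p\<in>?W. F p)" by (simp add: mult.commute)
  also have "\<dots> \<le> card (walks E x B (Suc (Suc n)))"
    by (rule card_mono[OF walks_fin[OF x] sub])
  finally show ?thesis .
qed

definition U where "U x B R = (\<Union>n\<le>R. walks E x B n)"

lemma card_U: assumes x: "x \<in> V" shows "card (U x B R) = (\<Sum>n\<le>R. card (walks E x B n))"
  unfolding U_def
  by (rule card_UN_disjoint) (use walks_fin[OF x] in \<open>auto simp: walks_def\<close>)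

lemma U_fin: "x \<in> V \<Longrightarrow> finite (U x B R)" by (simp add: U_def walks_fin)

lemma U_inj: assumes nc: "nocyc V E L" and "2 * R \<le> L"
  shows "inj_on hd (U x B R)"
proof
  fix p q assume p: "p \<in> U x B R" and q: "q \<in> U x B R" and h: "hd p = hd q"
  show "p = q"
    apply (rule nb_uniq[OF sg nc])
    using p q h assms(2) by (auto simp: U_def walks_def)
qed

lemma U_sub: "x \<in> V \<Longrightarrow> hd ` U x B R \<subseteq> V"
proof
  fix v assume "x \<in> V" "v \<in> hd ` U x B R"
  then obtain p n where "p \<in> walks E x B n" "v = hd p" by (auto simp: U_def)
  moreover then have "p \<noteq> []" by (auto simp: walks_def)
  ultimately show "v \<in> V" using walks_set \<open>x \<in> V\<close> by fastforce
qed

lemma odd_bound: assumes x: "x \<in> V" shows "3 * 2^R \<le> card (U x {} R) + 2"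
proof (induction R)
  case 0 then show ?case using card_U[OF x] by (simp add: walks0)
next
  case (Suc R)
  have lw: "3 * 2^m \<le> card (walks E x {} (Suc m))" for m
  proof (induction m)
    case 0
    have "inj (\<lambda>z. [z,x])" by (auto simp: inj_def)
    then show ?case using cardN[OF x] by (simp add: walks1 card_image inj_on_def)
  next
    case (Suc m) then show ?case using walks_step[OF x, of "{}" m] by simp
  qed
  have "card (U x {} (Suc R)) = card (U x {} R) + card (walks E x {} (Suc R))"
    using card_U[OF x] by simp
  then show ?case using Suc lw[of R] by simp
qed

lemma even_bound: assumes x: "x \<in> V" and y: "{x,y} \<in> E"
  shows "2^(Suc R) \<le> card (U x {y} R) + 1"
proof (induction R)
  case 0 then show ?case using card_U[OF x] by (simp add: walks0)
next
  case (Suc R)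
  have lw: "2 * 2^m \<le> card (walks E x {y} (Suc m))" for m
  proof (induction m)
    case 0
    have "inj (\<lambda>z. [z,x])" by (auto simp: inj_def)
    moreover have "y \<in> nbN V E x" using y sg_edge[OF sg y] by (simp add: nbN_def)
    ultimately show ?case using cardN[OF x] finN[of x]
      by (simp add: walks1 card_image inj_on_def card_Diff_singleton)
  next
    case (Suc m) then show ?case using walks_step[OF x, of "{y}" m] by simp
  qed
  have "card (U x {y} (Suc R)) = card (U x {y} R) + card (walks E x {y} (Suc R))"
    using card_U[OF x] by simp
  then show ?case using Suc lw[of R] by simp
qed

end

context G begin

lemma lw_vertex: assumes x: "x \<in> V" shows "3 * 2^m \<le> card (walks E x {} (Suc m))"
proof (induction m)
  case 0
  have "inj (\<lambda>z. [z,x])" by (auto simp: inj_def)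
  then show ?case using cardN[OF x] by (simp add: walks1 card_image inj_on_def)
next
  case (Suc m) then show ?case using walks_step[OF x, of "{}" m] by simp
qed

lemma has_cycle: assumes "V \<noteq> {}" shows "\<exists>cs. is_cycle V E cs"
proof -
  obtain x where x: "x \<in> V" using assms by blast
  let ?n = "card V"
  have "0 < card (walks E x {} ?n)"
    using lw_vertex[OF x, of "?n - 1"] finV x card_gt_0_iff[of V]
    by (metis Suc_pred' bot_nat_0.extremum_strict empty_iff leD nat_0_less_mult_iff not_gr0 zero_less_numeral zero_less_power)
  then obtain p where p: "p \<in> walks E x {} ?n" by (metis card.empty ex_in_conv less_irrefl)
  have sp: "set p \<subseteq> V" using walks_set[OF p x] .
  have "\<not> distinct p"
  proof
    assume "distinct p"
    then have "card (set p) = Suc ?n" using p by (simp add: walks_def distinct_card)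
    moreover have "card (set p) \<le> ?n" using card_mono[OF finV sp] .
    ultimately show False by simp
  qed
  then show ?thesis using nbw_repeat[OF sg, of p] p by (auto simp: walks_def)
qed

lemma odd_moore: assumes x: "x \<in> V" and nc: "nocyc V E (2*R)" shows "3 * 2^R \<le> card V + 2"
proof -
  have "card (U x {} R) = card (hd ` U x {} R)" using card_image[OF U_inj[OF nc, of R x "{}"]] by simp
  also have "\<dots> \<le> card V" using card_mono[OF finV U_sub[OF x]] .
  finally show ?thesis using odd_bound[OF x, of R] by simp
qed

lemma split2: "length p = Suc n \<Longrightarrow> 0 < n \<Longrightarrow> p = take (n-1) p @ [p!(n-1), p!n]"
proof -
  assume a: "length p = Suc n" "0 < n"
  have "drop (n-1) p = [p!(n-1), p!n]"
    using a by (metis Cons_nth_drop_Suc One_nat_def Suc_pred diff_Suc_1 drop_all lessI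
        less_Suc_eq order_refl)
  then show ?thesis by (metis append_take_drop_id)
qed

lemma even_moore: assumes x: "x \<in> V" and xy: "{x,y} \<in> E" and nc: "nocyc V E (2*R+1)"
  shows "2^(R+2) \<le> card V + 2"
proof -
  have y: "y \<in> V" and xny: "x \<noteq> y" using sg_edge[OF sg xy] by auto
  have yx: "{y,x} \<in> E" using xy by (simp add: insert_commute)
  have disj: "hd ` U x {y} R \<inter> hd ` U y {x} R = {}"
  proof (rule ccontr)
    assume "hd ` U x {y} R \<inter> hd ` U y {x} R \<noteq> {}"
    then obtain p q n m where p: "p \<in> walks E x {y} n" "n \<le> R" and q: "q \<in> walks E y {x} m" "m \<le> R"
      and h: "hd p = hd q" by (auto simp: U_def)
    have pp: "nbw E p" "length p = Suc n" "last p = x" "0 < n \<longrightarrow> p!(n-1) \<noteq> y"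
      using p by (auto simp: walks_def)
    have qq: "nbw E q" "length q = Suc m" "last q = y" "0 < m \<longrightarrow> q!(m-1) \<noteq> x"
      using q by (auto simp: walks_def)
    have pn: "p!n = x" using pp by (metis diff_Suc_1 last_conv_nth list.size(3) nat.distinct(1))
    have np': "nbw E (p @ [y])"
    proof (cases "n = 0")
      case True
      then have "p = [x]" using pp by (metis length_0_conv length_Suc_conv last_ConsL)
      then show ?thesis using xy by simp
    next
      case False
      define w where "w = p!(n-1)"
      have sp: "p = take (n-1) p @ [w, x]" using split2[OF pp(2)] False pn w_def by simp
      have wx: "{w,x} \<in> E" using pp(1) pp(2) False unfolding w_def nbw_idx
        by (metis Suc_pred' not_gr0 lessI pn)
      have "nbw E [w,x,y]" using wx xy pp(4) False w_def by simp
      then have "nbw E (take (n-1) p @ [w,x,y])" using nbw_glue[of E "take (n-1) p" w x "[y]"] sp pp(1)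
        by simp
      then show ?thesis using sp by (metis append.assoc append_Cons append_Nil)
    qed
    have "p @ [y] = q"
      apply (rule nb_uniq[OF sg nc np' qq(1)])
      using pp(2,3) qq(2,3) h p(2) q(2) by (auto simp: hd_append)
    then have "m = Suc n" using pp(2) qq(2) by (metis length_append_singleton nat.inject)
    then have "q!(m-1) = x" using \<open>p @ [y] = q\<close> pn pp(2) by (metis diff_Suc_1 lessI nth_append)
    then show False using qq \<open>m = Suc n\<close> by simp
  qed
  have "card (U x {y} R) + card (U y {x} R) = card (hd ` U x {y} R) + card (hd ` U y {x} R)"
    using card_image[OF U_inj[OF nc, of R x "{y}"]] card_image[OF U_inj[OF nc, of R y "{x}"]] by simp
  also have "\<dots> = card (hd ` U x {y} R \<union> hd ` U y {x} R)"
    using card_Un_disjoint[OF _ _ disj] U_fin[OF x] U_fin[OF y] by simp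
  also have "\<dots> \<le> card V" using card_mono[OF finV] U_sub[OF x] U_sub[OF y] by simp
  finally show ?thesis using even_bound[OF x xy, of R] even_bound[OF y yx, of R] by simp
qed

lemma handshake: "(\<Sum>u\<in>V. card (nbN V E u)) = 2 * card E"
proof -
  define P where "P e = {(u,w). u \<in> V \<and> w \<in> V \<and> {u,w} = e}" for e
  have finE: "finite E"
  proof -
    have "E \<subseteq> Pow V"
    proof
      fix e assume "e \<in> E"
      then obtain u v where "e = {u,v}" "u \<in> V" "v \<in> V"
        using sg unfolding simple_graph_def by meson
      then show "e \<in> Pow V" by simp
    qed
    then show ?thesis using finV by (meson finite_Pow_iff finite_subset)
  qed
  have D: "Sigma V (nbN V E) = (\<Union>e\<in>E. P e)" by (auto simp: P_def nbN_def)
  have cP: "card (P e) = 2" if eE: "e \<in> E" for e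
  proof -
    obtain a b where ab: "e = {a,b}" "a \<in> V" "b \<in> V" "a \<noteq> b" using sg eE unfolding simple_graph_def by meson
    then have "P e = {(a,b),(b,a)}" by (auto simp: P_def doubleton_eq_iff)
    then show ?thesis using ab by simp
  qed
  have "(\<Sum>u\<in>V. card (nbN V E u)) = card (Sigma V (nbN V E))"
    using finV finN by simp
  also have "\<dots> = (\<Sum>e\<in>E. card (P e))" unfolding D
    apply (rule card_UN_disjoint[OF finE])
     apply (intro ballI, rule finite_subset[of _ "V \<times> V"], force simp: P_def, simp add: finV)
    apply (auto simp: P_def)
    done
  also have "\<dots> = 2 * card E" using cP by simp
  finally show ?thesis .
qed

end

lemma iso_list:
  fixes xs :: "nat list"
  assumes d: "distinct xs" and V: "V = set xs" and E: "E = (`) (nth xs) ` E2"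
    and E2: "\<forall>e\<in>E2. e \<subseteq> {0..<length xs}"
  shows "graph_iso V E {0..<length xs} E2"
proof -
  let ?g = "nth xs" and ?I = "{0..<length xs}"
  have inj: "inj_on ?g ?I" using inj_on_nth[OF d] by simp
  have im: "?g ` ?I = V" using V by (auto simp: in_set_conv_nth)
  have bg: "bij_betw ?g ?I V" using inj im by (simp add: bij_betw_def)
  define f where "f = inv_into ?I ?g"
  have bf: "bij_betw f V ?I" unfolding f_def by (rule bij_betw_inv_into[OF bg])
  show ?thesis unfolding graph_iso_def
  proof (intro exI conjI ballI)
    show "bij_betw f V ?I" by (rule bf)
  next
    fix u v assume u: "u \<in> V" and v: "v \<in> V"
    obtain i where i: "i \<in> ?I" "u = ?g i" using u im by blast
    obtain j where j: "j \<in> ?I" "v = ?g j" using v im by blast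
    have fi: "f u = i" using i inj unfolding f_def by (simp add: inv_into_f_f)
    have fj: "f v = j" using j inj unfolding f_def by (simp add: inv_into_f_f)
    have "{u,v} \<in> E \<longleftrightarrow> (\<exists>e\<in>E2. ?g ` {i,j} = ?g ` e)" using E i j by auto
    also have "\<dots> \<longleftrightarrow> (\<exists>e\<in>E2. {i,j} = e)"
      using E2 i j inj_on_image_eq_iff[OF inj] by (metis empty_subsetI insert_subset)
    also have "\<dots> \<longleftrightarrow> {f u, f v} \<in> E2" using fi fj by auto
    finally show "{u,v} \<in> E \<longleftrightarrow> {f u, f v} \<in> E2" .
  qed
qed

locale Cub = G +
  fixes L :: nat
  assumes cub: "\<forall>u\<in>V. card (nbN V E u) = 3"
  and nc: "nocyc V E L"
begin

lemma Nmem: "w \<in> nbN V E u \<longleftrightarrow> {u,w} \<in> E"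
  using sg_edge[OF sg] by (auto simp: nbN_def)

lemma excl:
  assumes "nbw E p" "nbw E q" "p \<noteq> q" "p \<noteq> []" "q \<noteq> []" "hd p = hd q" "last p = last q"
    "length p + length q \<le> L + 2"
  shows False
  using nb_uniq[OF sg nc assms(1,2,4,5,6,7,8)] assms(3) by simp

lemma getN: assumes "u \<in> V" "{u,w} \<in> E"
  obtains p q where "nbN V E u = {w,p,q}" "w \<noteq> p" "w \<noteq> q" "p \<noteq> q"
proof -
  have w: "w \<in> nbN V E u" using assms Nmem by simp
  have "card (nbN V E u - {w}) = 2" using cub assms(1) w finN by (simp add: card_Diff_singleton)
  then obtain p q where pq: "nbN V E u - {w} = {p,q}" "p \<noteq> q" by (auto simp: card_2_iff)
  then have "nbN V E u = {w,p,q}" using w by blast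
  moreover have "w \<noteq> p" "w \<noteq> q" using pq by blast+
  ultimately show ?thesis using that pq by blast
qed

lemma getN0: assumes "u \<in> V"
  obtains a b c where "nbN V E u = {a,b,c}" "a \<noteq> b" "a \<noteq> c" "b \<noteq> c"
  using cub assms by (auto simp: card_3_iff)

lemma N3: assumes "u \<in> V" "{u,a} \<in> E" "{u,b} \<in> E" "{u,c} \<in> E" "a \<noteq> b" "a \<noteq> c" "b \<noteq> c"
  shows "nbN V E u = {a,b,c}"
proof -
  have "{a,b,c} \<subseteq> nbN V E u" using assms Nmem by auto
  moreover have "card {a,b,c} = 3" using assms by simp
  ultimately show ?thesis using card_subset_eq[OF finN, of "{a,b,c}" u] cub assms(1) by simp
qed

lemma sub3: assumes "u \<in> V" "nbN V E u \<subseteq> {a,b,c}"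
  shows "nbN V E u = {a,b,c}"
proof -
  have "card {a,b,c} \<le> 3" by (simp add: card_insert_le_m1)
  then show ?thesis using card_subset_eq[of "{a,b,c}" "nbN V E u"] cub assms
    by (metis card_mono dual_order.antisym finite.emptyI finite.insertI)
qed

lemma Vlist: assumes "distinct xs" "set xs \<subseteq> V" "length xs = card V" shows "V = set xs"
  using card_subset_eq[OF finV assms(2)] assms by (simp add: distinct_card)

lemma E_char: "E = (\<Union>u\<in>V. (\<lambda>w. {u,w}) ` nbN V E u)"
proof
  show "E \<subseteq> (\<Union>u\<in>V. (\<lambda>w. {u,w}) ` nbN V E u)"
  proof
    fix e assume "e \<in> E"
    then obtain u w where "e = {u,w}" "u \<in> V" "w \<in> V" using sg unfolding simple_graph_def by blast
    then show "e \<in> (\<Union>u\<in>V. (\<lambda>w. {u,w}) ` nbN V E u)" using \<open>e \<in> E\<close> by (auto simp: nbN_def)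
  qed
qed (auto simp: nbN_def)

end

context Cub begin
lemma esym: "{a,b} \<in> E \<Longrightarrow> {b,a} \<in> E" by (simp add: insert_commute)
lemma noedge: "{u,w} \<in> E \<Longrightarrow> ({u,w} \<in> E \<Longrightarrow> {w,u} \<in> E \<Longrightarrow> False) \<Longrightarrow> False"
  by (simp add: insert_commute)
end

definition "K33E = {{0,1},{0,2},{0,3},{1,4},{1,5},{2,4},{2,5},{3,4},{3,5::nat}}"

lemma K33:
  fixes V :: "nat set"
  assumes "Cub V E 3" "card V = 6"
  shows "graph_iso V E {0..<6} K33E"
proof -
  interpret Cub V E 3 by (rule assms(1))
  have "V \<noteq> {}" using assms by auto
  then obtain x where x: "x \<in> V" by blast
  obtain y a1 a2 where Nx: "nbN V E x = {y,a1,a2}" "y \<noteq> a1" "y \<noteq> a2" "a1 \<noteq> a2" using getN0[OF x] by blast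
  have ex: "{x,y} \<in> E" "{x,a1} \<in> E" "{x,a2} \<in> E" using Nx Nmem by auto
  have y: "y \<in> V" and a1: "a1 \<in> V" and a2: "a2 \<in> V" and xy: "x \<noteq> y" "x \<noteq> a1" "x \<noteq> a2"
    using sg_edge[OF sg] ex by blast+
  obtain b1 b2 where Ny: "nbN V E y = {x,b1,b2}" "x \<noteq> b1" "x \<noteq> b2" "b1 \<noteq> b2"
    using getN[OF y esym[OF ex(1)]] by blast
  have ey: "{y,b1} \<in> E" "{y,b2} \<in> E" using Ny Nmem by auto
  have b1: "b1 \<in> V" and b2: "b2 \<in> V" and yb: "y \<noteq> b1" "y \<noteq> b2" using sg_edge[OF sg] ey by blast+
  note es = ex ey esym[OF ex(1)] esym[OF ex(2)] esym[OF ex(3)] esym[OF ey(1)] esym[OF ey(2)]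
  note ne = xy yb Nx(2-4) Ny(2-4)
  have ab: "a \<noteq> b" if "a = a1 \<or> a = a2" "b = b1 \<or> b = b2" for a b
  proof
    assume "a = b"
    then have "{y,a} \<in> E" "{a,y} \<in> E" using that es by auto
    then show False using excl[of "[a,x]" "[a,y,x]"] that ne es by auto
  qed
  have dl: "distinct [x,y,a1,a2,b1,b2]" using ab[of a1 b1] ab[of a1 b2] ab[of a2 b1] ab[of a2 b2] ne by simp
  have VV: "V = {x,y,a1,a2,b1,b2}" using Vlist[OF dl] x y a1 a2 b1 b2 assms(2) by simp
  have Na: "nbN V E a = {x,b1,b2}" if a: "a = a1 \<or> a = a2" for a
  proof (rule sub3)
    show "a \<in> V" using a a1 a2 by auto
    have ax: "{a,x} \<in> E" using a es by auto
    show "nbN V E a \<subseteq> {x,b1,b2}"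
    proof
      fix w assume w: "w \<in> nbN V E a"
      then have wa: "{a,w} \<in> E" "w \<in> V" "w \<noteq> a" using Nmem sg_edge[OF sg] by blast+
      have wa': "{w,a} \<in> E" using esym[OF wa(1)] .
      have "w \<noteq> y"
      proof
        assume "w = y"
        then show False using excl[of "[a,y,x]" "[a,x]"] wa wa' a ne es ax by auto
      qed
      moreover have "w \<noteq> a1" "w \<noteq> a2"
        using excl[of "[w,a,x]" "[w,x]"] wa wa' a ne es ax by auto
      ultimately show "w \<in> {x,b1,b2}" using wa VV by auto
    qed
  qed
  have "b1 \<in> nbN V E a1" "b2 \<in> nbN V E a1" "b1 \<in> nbN V E a2" "b2 \<in> nbN V E a2"
    using Na[of a1] Na[of a2] by simp_all
  then have eab: "{b1,a1} \<in> E" "{b2,a1} \<in> E" "{b1,a2} \<in> E" "{b2,a2} \<in> E"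
    unfolding Nmem by (simp_all add: insert_commute)
  have Nb: "nbN V E b = {y,a1,a2}" if b: "b = b1 \<or> b = b2" for b
  proof (rule N3)
    show "b \<in> V" using b b1 b2 by auto
    show "{b,y} \<in> E" using b es by auto
    show "{b,a1} \<in> E" "{b,a2} \<in> E" using b eab by auto
  qed (use ne in auto)
  define T where "T = {{x,y},{x,a1},{x,a2},{y,b1},{y,b2},{a1,b1},{a1,b2},{a2,b1},{a2,b2}}"
  have memT: "{u,w} \<in> T" if "{u,w} \<in> T \<or> {w,u} \<in> T" for u w
    using that by (metis insert_commute)
  have "E \<subseteq> T"
  proof
    fix e assume "e \<in> E"
    then obtain u w where e: "e = {u,w}" "u \<in> V" "w \<in> nbN V E u" by (subst (asm) E_char) blast
    have uu: "u = x \<or> u = y \<or> u = a1 \<or> u = a2 \<or> u = b1 \<or> u = b2" using e(2) VV by blast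
    have h: "\<forall>w\<in>nbN V E u'. {u',w} \<in> T \<or> {w,u'} \<in> T" if "u' \<in> {x,y,a1,a2,b1,b2}" for u'
    proof -
      have "\<forall>w\<in>nbN V E x. {x,w} \<in> T \<or> {w,x} \<in> T" by (simp add: Nx T_def)
      moreover have "\<forall>w\<in>nbN V E y. {y,w} \<in> T \<or> {w,y} \<in> T" by (simp add: Ny T_def)
      moreover have "\<forall>w\<in>nbN V E a1. {a1,w} \<in> T \<or> {w,a1} \<in> T" by (simp add: Na T_def)
      moreover have "\<forall>w\<in>nbN V E a2. {a2,w} \<in> T \<or> {w,a2} \<in> T" by (simp add: Na T_def)
      moreover have "\<forall>w\<in>nbN V E b1. {b1,w} \<in> T \<or> {w,b1} \<in> T" by (simp add: Nb T_def)
      moreover have "\<forall>w\<in>nbN V E b2. {b2,w} \<in> T \<or> {w,b2} \<in> T" by (simp add: Nb T_def)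
      ultimately show ?thesis using that by blast
    qed
    have "{u,w} \<in> T \<or> {w,u} \<in> T" using h[of u] e(2,3) VV by blast
    then show "e \<in> T" using memT e(1) by blast
  qed
  moreover have "T \<subseteq> E" unfolding T_def using es eab by (simp add: insert_commute)
  ultimately have EE: "E = T" by blast
  have "graph_iso V E {0..<length [x,y,a1,a2,b1,b2]} K33E"
    apply (rule iso_list[OF dl])
      apply (simp add: VV)
     apply (simp add: EE K33E_def T_def)
    apply (simp add: K33E_def)
    done
  then show ?thesis by (simp add: eval_nat_numeral)
qed

context Cub begin
lemma hd_distinct:
  assumes "\<forall>p\<in>set ws. nbw E p \<and> p \<noteq> [] \<and> last p = r \<and> 2 * length p \<le> L + 2" "distinct ws"
  shows "distinct (map hd ws)"
proof -
  have "inj_on hd (set ws)"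
  proof
    fix p q assume "p \<in> set ws" "q \<in> set ws" "hd p = hd q"
    then have "nbw E p \<and> p \<noteq> [] \<and> last p = r \<and> 2 * length p \<le> L + 2"
      "nbw E q \<and> q \<noteq> [] \<and> last q = r \<and> 2 * length q \<le> L + 2" using assms(1) by blast+
    then show "p = q" using nb_uniq[OF sg nc, of p q] \<open>hd p = hd q\<close> by simp
  qed
  then show ?thesis using assms(2) by (simp add: distinct_map)
qed

lemma hd_disj:
  assumes "\<forall>p\<in>set ws. nbw E p \<and> p \<noteq> [] \<and> last p = r \<and> length p \<le> m1"
    "\<forall>p\<in>set ws2. nbw E p \<and> p \<noteq> [] \<and> last p = r \<and> length p \<le> m2"
    "m1 + m2 \<le> L + 2" "set ws \<inter> set ws2 = {}"
  shows "set (map hd ws) \<inter> set (map hd ws2) = {}"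
proof (rule ccontr)
  assume "set (map hd ws) \<inter> set (map hd ws2) \<noteq> {}"
  then obtain p q where "p \<in> set ws" "q \<in> set ws2" "hd p = hd q" by auto
  then have "nbw E p \<and> p \<noteq> [] \<and> last p = r \<and> length p \<le> m1"
      "nbw E q \<and> q \<noteq> [] \<and> last q = r \<and> length q \<le> m2" using assms(1,2) by blast+
  then have "p = q" using nb_uniq[OF sg nc, of p q] \<open>hd p = hd q\<close> assms(3) by simp
  then show False using assms(4) \<open>p \<in> set ws\<close> \<open>q \<in> set ws2\<close> by blast
qed
end

lemma pet_gen:
  assumes C: "Cub V E 4"
  and Nx: "nbN V E x = {ai,aj,ak}" and Ni: "nbN V E ai = {x,b,b'}"
  and Nj: "nbN V E aj = {x,c1,c2}" and Nk: "nbN V E ak = {x,d1,d2}"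
  and VV: "V \<subseteq> {x,ai,aj,ak,b,b',c1,c2,d1,d2}"
  and dl: "distinct [x,ai,aj,ak,b,b',c1,c2,d1,d2]"
  shows "(c1 \<in> nbN V E b) \<noteq> (c2 \<in> nbN V E b)" "(d1 \<in> nbN V E b) \<noteq> (d2 \<in> nbN V E b)"
    "nbN V E b \<subseteq> {ai,c1,c2,d1,d2}"
proof -
  interpret Cub V E 4 by (rule C)
  have e: "{x,ai} \<in> E" "{x,aj} \<in> E" "{x,ak} \<in> E" "{ai,b} \<in> E" "{ai,b'} \<in> E"
    "{aj,c1} \<in> E" "{aj,c2} \<in> E" "{ak,d1} \<in> E" "{ak,d2} \<in> E"
    using Nx Ni Nj Nk Nmem by auto
  note es = e esym[OF e(1)] esym[OF e(2)] esym[OF e(3)] esym[OF e(4)] esym[OF e(5)]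
    esym[OF e(6)] esym[OF e(7)] esym[OF e(8)] esym[OF e(9)]
  have ne: "x \<noteq> ai" "x \<noteq> aj" "x \<noteq> ak" "x \<noteq> b" "x \<noteq> b'" "x \<noteq> c1" "x \<noteq> c2" "x \<noteq> d1" "x \<noteq> d2"
    "ai \<noteq> aj" "ai \<noteq> ak" "ai \<noteq> b" "ai \<noteq> b'" "aj \<noteq> ak" "aj \<noteq> b" "ak \<noteq> b" "aj \<noteq> c1" "aj \<noteq> c2"
    "ak \<noteq> d1" "ak \<noteq> d2" "b \<noteq> b'" "c1 \<noteq> c2" "d1 \<noteq> d2" "b \<noteq> c1" "b \<noteq> c2" "b \<noteq> d1" "b \<noteq> d2"
    using dl by auto
  have bV: "b \<in> V" using e sg_edge[OF sg] by blast
  have sub: "nbN V E b \<subseteq> {ai,c1,c2,d1,d2}"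
  proof
    fix w assume w: "w \<in> nbN V E b"
    then have wb: "{b,w} \<in> E" "w \<in> V" "w \<noteq> b" using Nmem sg_edge[OF sg] by blast+
    have wb': "{w,b} \<in> E" using esym[OF wb(1)] .
    have "w \<noteq> x" using excl[of "[b,x]" "[b,ai,x]"] wb wb' es ne by auto
    moreover have "w \<noteq> aj" using excl[of "[b,w,x]" "[b,ai,x]"] wb wb' es ne by auto
    moreover have "w \<noteq> ak" using excl[of "[b,w,x]" "[b,ai,x]"] wb wb' es ne by auto
    moreover have "w \<noteq> b'" using excl[of "[b',b,ai]" "[b',ai]"] wb wb' es ne by auto
    ultimately show "w \<in> {ai,c1,c2,d1,d2}" using wb VV by auto
  qed
  have nc: "\<not> (c1 \<in> nbN V E b \<and> c2 \<in> nbN V E b)"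
  proof
    assume "c1 \<in> nbN V E b \<and> c2 \<in> nbN V E b"
    then have "{b,c1} \<in> E" "{b,c2} \<in> E" using Nmem by auto
    then show False using excl[of "[b,c1,aj]" "[b,c2,aj]"] es ne esym by auto
  qed
  have nd: "\<not> (d1 \<in> nbN V E b \<and> d2 \<in> nbN V E b)"
  proof
    assume "d1 \<in> nbN V E b \<and> d2 \<in> nbN V E b"
    then have "{b,d1} \<in> E" "{b,d2} \<in> E" using Nmem by auto
    then show False using excl[of "[b,d1,ak]" "[b,d2,ak]"] es ne esym by auto
  qed
  have ai: "ai \<in> nbN V E b" using es Nmem by auto
  have "c1 \<in> nbN V E b \<or> c2 \<in> nbN V E b"
  proof (rule ccontr)
    assume "\<not> ?thesis"
    then have "nbN V E b \<subseteq> {ai,d1,d2}" using sub by auto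
    then have "nbN V E b = {ai,d1,d2}" using sub3[OF bV] by blast
    then show False using nd by auto
  qed
  then show "(c1 \<in> nbN V E b) \<noteq> (c2 \<in> nbN V E b)" using nc by blast
  have "d1 \<in> nbN V E b \<or> d2 \<in> nbN V E b"
  proof (rule ccontr)
    assume "\<not> ?thesis"
    then have "nbN V E b \<subseteq> {ai,c1,c2}" using sub by auto
    then have "nbN V E b = {ai,c1,c2}" using sub3[OF bV] by blast
    then show False using nc by auto
  qed
  then show "(d1 \<in> nbN V E b) \<noteq> (d2 \<in> nbN V E b)" using nd by blast
  show "nbN V E b \<subseteq> {ai,c1,c2,d1,d2}" by (rule sub)
qed

definition adjE :: "nat list list \<Rightarrow> nat set set" where
  "adjE al = {{i,j} | i j. i < length al \<and> j \<in> set (al ! i)}"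

lemma iso_adj:
  fixes xs :: "nat list"
  assumes sg: "simple_graph V E" and d: "distinct xs" and V: "V = set xs" and len: "length al = length xs"
    and N: "\<forall>i<length xs. nbN V E (xs!i) = (nth xs) ` set (al!i)"
    and rng: "\<forall>i<length xs. set (al!i) \<subseteq> {0..<length xs}"
  shows "graph_iso V E {0..<length xs} (adjE al)"
proof -
  let ?g = "nth xs" and ?I = "{0..<length xs}"
  have inj: "inj_on ?g ?I" using inj_on_nth[OF d] by simp
  have im: "?g ` ?I = V" using V by (auto simp: in_set_conv_nth)
  have bg: "bij_betw ?g ?I V" using inj im by (simp add: bij_betw_def)
  define f where "f = inv_into ?I ?g"
  have bf: "bij_betw f V ?I" unfolding f_def by (rule bij_betw_inv_into[OF bg])
  have key: "{xs!i, xs!j} \<in> E \<longleftrightarrow> j \<in> set (al!i)" if "i \<in> ?I" "j \<in> ?I" for i j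
  proof -
    have "{xs!i, xs!j} \<in> E \<longleftrightarrow> xs!j \<in> nbN V E (xs!i)" using that V by (simp add: nbN_def)
    also have "\<dots> \<longleftrightarrow> xs!j \<in> ?g ` set (al!i)" using N that by simp
    also have "\<dots> \<longleftrightarrow> j \<in> set (al!i)"
      using inj_on_image_mem_iff[OF inj, of j "set (al!i)"] rng that by auto
    finally show ?thesis .
  qed
  show ?thesis unfolding graph_iso_def
  proof (intro exI conjI ballI)
    show "bij_betw f V ?I" by (rule bf)
  next
    fix u v assume u: "u \<in> V" and v: "v \<in> V"
    obtain i where i: "i \<in> ?I" "u = ?g i" using u im by blast
    obtain j where j: "j \<in> ?I" "v = ?g j" using v im by blast
    have fi: "f u = i" using i inj unfolding f_def by (simp add: inv_into_f_f)
    have fj: "f v = j" using j inj unfolding f_def by (simp add: inv_into_f_f)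
    have sym: "j \<in> set (al!i) \<longleftrightarrow> i \<in> set (al!j)"
      using key[OF i(1) j(1)] key[OF j(1) i(1)] by (simp add: insert_commute)
    have "{i,j} \<in> adjE al \<longleftrightarrow> j \<in> set (al!i) \<or> i \<in> set (al!j)"
      unfolding adjE_def using i j len by (auto simp: doubleton_eq_iff)
    also have "\<dots> \<longleftrightarrow> {u,v} \<in> E" using sym key[OF i(1) j(1)] i j by simp
    finally show "{u,v} \<in> E \<longleftrightarrow> {f u, f v} \<in> adjE al" using fi fj by simp
  qed
qed

definition "petA = [[1,2,3],[0,4,5],[0,6,7],[0,8,9],[1,6,8],[1,7,9],[2,4,9],[2,5,8],[3,4,7],[3,5,6::nat]]"

context Cub begin
lemma Nsym: "u \<in> nbN V E w \<longleftrightarrow> w \<in> nbN V E u"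
  by (simp add: Nmem insert_commute)
end

definition "PetE = adjE petA"

lemma pet_final:
  fixes V :: "nat set"
  assumes C: "Cub V E 4"
  and Nx: "nbN V E x = {a1,a2,a3}" and Na1: "nbN V E a1 = {x,b11,b12}"
  and Na2: "nbN V E a2 = {x,b21,b22}" and Na3: "nbN V E a3 = {x,b31,b32}"
  and VV: "V = {x,a1,a2,a3,b11,b12,b21,b22,b31,b32}"
  and dl: "distinct [x,a1,a2,a3,b11,b12,b21,b22,b31,b32]"
  and h1: "{b11,b21} \<in> E" and h2: "{b11,b31} \<in> E"
  shows "graph_iso V E {0..<10} PetE"
proof -
  interpret Cub V E 4 by (rule C)
  have Nx2: "nbN V E x = {a2,a1,a3}" and Nx3: "nbN V E x = {a3,a1,a2}" using Nx by auto
  have Na1': "nbN V E a1 = {x,b12,b11}" using Na1 by auto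
  have Na2': "nbN V E a2 = {x,b22,b21}" using Na2 by auto
  have Na3': "nbN V E a3 = {x,b32,b31}" using Na3 by auto
  note P = pet_gen[OF C]
  have g11: "(b21 \<in> nbN V E b11) \<noteq> (b22 \<in> nbN V E b11)" "(b31 \<in> nbN V E b11) \<noteq> (b32 \<in> nbN V E b11)"
     "nbN V E b11 \<subseteq> {a1,b21,b22,b31,b32}"
    using P[OF Nx Na1 Na2 Na3] VV dl by auto
  have g12: "(b21 \<in> nbN V E b12) \<noteq> (b22 \<in> nbN V E b12)" "(b31 \<in> nbN V E b12) \<noteq> (b32 \<in> nbN V E b12)"
     "nbN V E b12 \<subseteq> {a1,b21,b22,b31,b32}"
    using P[OF Nx Na1' Na2 Na3] VV dl by auto
  have g21: "(b11 \<in> nbN V E b21) \<noteq> (b12 \<in> nbN V E b21)" "(b31 \<in> nbN V E b21) \<noteq> (b32 \<in> nbN V E b21)"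
     "nbN V E b21 \<subseteq> {a2,b11,b12,b31,b32}"
    using P[OF Nx2 Na2 Na1 Na3] VV dl by auto
  have g22: "(b11 \<in> nbN V E b22) \<noteq> (b12 \<in> nbN V E b22)" "(b31 \<in> nbN V E b22) \<noteq> (b32 \<in> nbN V E b22)"
     "nbN V E b22 \<subseteq> {a2,b11,b12,b31,b32}"
    using P[OF Nx2 Na2' Na1 Na3] VV dl by auto
  have g31: "(b11 \<in> nbN V E b31) \<noteq> (b12 \<in> nbN V E b31)" "(b21 \<in> nbN V E b31) \<noteq> (b22 \<in> nbN V E b31)"
    using P[OF Nx3 Na3 Na1 Na2] VV dl by auto
  have g32: "(b11 \<in> nbN V E b32) \<noteq> (b12 \<in> nbN V E b32)" "(b21 \<in> nbN V E b32) \<noteq> (b22 \<in> nbN V E b32)"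
    using P[OF Nx3 Na3' Na1 Na2] VV dl by auto
  have inV: "x \<in> V" "a1 \<in> V" "a2 \<in> V" "a3 \<in> V" "b11 \<in> V" "b12 \<in> V" "b21 \<in> V" "b22 \<in> V" "b31 \<in> V" "b32 \<in> V"
    using VV by auto
  have m1: "b21 \<in> nbN V E b11" "b31 \<in> nbN V E b11" using h1 h2 Nmem by auto
  have m2: "b11 \<in> nbN V E b21" "b11 \<in> nbN V E b31" using m1 Nsym by auto
  have NB11: "nbN V E b11 = {a1,b21,b31}"
    using sub3[OF inV(5), of a1 b21 b31] g11 m1 by blast
  have "b12 \<notin> nbN V E b21" using g21(1) m2 by blast
  then have "b22 \<in> nbN V E b12" using g12(1) Nsym by blast
  have "b12 \<notin> nbN V E b31" using g31(1) m2 by blast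
  then have "b32 \<in> nbN V E b12" using g12(2) Nsym by blast
  have NB12: "nbN V E b12 = {a1,b22,b32}"
    using sub3[OF inV(6), of a1 b22 b32] g12 \<open>b22 \<in> nbN V E b12\<close> \<open>b32 \<in> nbN V E b12\<close> by blast
  have ne: "b31 \<noteq> b11" "b32 \<noteq> b12" using dl by auto
  have "b31 \<notin> nbN V E b21"
  proof
    assume "b31 \<in> nbN V E b21"
    then have "{b31,b21} \<in> E" "{b21,b11} \<in> E" "{b31,b11} \<in> E" using Nmem Nsym m1 m2 by blast+
    then show False using excl[of "[b31,b21,b11]" "[b31,b11]"] ne by auto
  qed
  then have "b32 \<in> nbN V E b21" using g21(2) by blast
  have NB21: "nbN V E b21 = {a2,b11,b32}"
    using sub3[OF inV(7), of a2 b11 b32] g21 m2 \<open>b32 \<in> nbN V E b21\<close> by blast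
  have "b12 \<in> nbN V E b22" using \<open>b22 \<in> nbN V E b12\<close> Nsym by blast
  have "b32 \<notin> nbN V E b22"
  proof
    assume "b32 \<in> nbN V E b22"
    then have "{b32,b22} \<in> E" "{b22,b12} \<in> E" "{b32,b12} \<in> E"
      using Nmem Nsym \<open>b22 \<in> nbN V E b12\<close> \<open>b32 \<in> nbN V E b12\<close> by blast+
    then show False using excl[of "[b32,b22,b12]" "[b32,b12]"] ne by auto
  qed
  then have "b31 \<in> nbN V E b22" using g22(2) by blast
  have NB22: "nbN V E b22 = {a2,b12,b31}"
    using sub3[OF inV(8), of a2 b12 b31] g22 \<open>b12 \<in> nbN V E b22\<close> \<open>b31 \<in> nbN V E b22\<close> by blast
  have NB31: "nbN V E b31 = {a3,b11,b22}"
  proof -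
    have "a3 \<in> nbN V E b31" "b11 \<in> nbN V E b31" "b22 \<in> nbN V E b31"
      using Na3 m2 \<open>b31 \<in> nbN V E b22\<close> Nsym by auto
    then show ?thesis using N3[OF inV(9)] dl Nmem by auto
  qed
  have NB32: "nbN V E b32 = {a3,b12,b21}"
  proof -
    have "a3 \<in> nbN V E b32" "b12 \<in> nbN V E b32" "b21 \<in> nbN V E b32"
      using Na3 \<open>b32 \<in> nbN V E b12\<close> \<open>b32 \<in> nbN V E b21\<close> Nsym by auto
    then show ?thesis using N3[OF inV(10)] dl Nmem by auto
  qed
  have "graph_iso V E {0..<length [x,a1,a2,a3,b11,b12,b21,b22,b31,b32]} (adjE petA)"
    apply (rule iso_adj[OF sg dl])
       apply (simp add: VV)
      apply (simp add: petA_def)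
     apply (simp add: All_less_Suc eval_nat_numeral petA_def Nx Na1 Na2 Na3 NB11 NB12 NB21 NB22 NB31 NB32 insert_commute)
    apply (simp add: All_less_Suc eval_nat_numeral petA_def)
    done
  then show ?thesis by (simp add: eval_nat_numeral PetE_def)
qed

lemma Pet:
  fixes V :: "nat set"
  assumes C: "Cub V E 4" and cV: "card V = 10"
  shows "graph_iso V E {0..<10} PetE"
proof -
  interpret Cub V E 4 by (rule C)
  have "V \<noteq> {}" using cV by auto
  then obtain x where x: "x \<in> V" by blast
  obtain a1 a2 a3 where Nx: "nbN V E x = {a1,a2,a3}" "a1 \<noteq> a2" "a1 \<noteq> a3" "a2 \<noteq> a3"
    using getN0[OF x] by blast
  have ex: "{x,a1} \<in> E" "{x,a2} \<in> E" "{x,a3} \<in> E" using Nx Nmem by auto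
  have a: "a1 \<in> V" "a2 \<in> V" "a3 \<in> V" using sg_edge[OF sg] ex by blast+
  obtain b11 b12 where N1: "nbN V E a1 = {x,b11,b12}" "x \<noteq> b11" "x \<noteq> b12" "b11 \<noteq> b12"
    using getN[OF a(1) esym[OF ex(1)]] by blast
  obtain b21 b22 where N2: "nbN V E a2 = {x,b21,b22}" "x \<noteq> b21" "x \<noteq> b22" "b21 \<noteq> b22"
    using getN[OF a(2) esym[OF ex(2)]] by blast
  obtain b31 b32 where N3: "nbN V E a3 = {x,b31,b32}" "x \<noteq> b31" "x \<noteq> b32" "b31 \<noteq> b32"
    using getN[OF a(3) esym[OF ex(3)]] by blast
  have "b11 \<in> nbN V E a1" "b12 \<in> nbN V E a1" "b21 \<in> nbN V E a2" "b22 \<in> nbN V E a2"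
    "b31 \<in> nbN V E a3" "b32 \<in> nbN V E a3" by (simp_all add: N1 N2 N3)
  then have eb: "{b11,a1} \<in> E" "{b12,a1} \<in> E" "{b21,a2} \<in> E" "{b22,a2} \<in> E" "{b31,a3} \<in> E" "{b32,a3} \<in> E"
    unfolding Nmem by (simp_all add: insert_commute)
  note es = eb esym[OF ex(1)] esym[OF ex(2)] esym[OF ex(3)]
  define ws where "ws = [[x],[a1,x],[a2,x],[a3,x],[b11,a1,x],[b12,a1,x],[b21,a2,x],[b22,a2,x],[b31,a3,x],[b32,a3,x]]"
  have "distinct (map hd ws)"
    apply (rule hd_distinct[of _ x])
    unfolding ws_def using es N1 N2 N3 Nx by auto
  then have dl: "distinct [x,a1,a2,a3,b11,b12,b21,b22,b31,b32]" by (simp add: ws_def)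
  have inV: "set [x,a1,a2,a3,b11,b12,b21,b22,b31,b32] \<subseteq> V" using x a eb sg_edge[OF sg] by auto
  have VV: "V = {x,a1,a2,a3,b11,b12,b21,b22,b31,b32}" using Vlist[OF dl inV] cV by simp
  have g: "(b21 \<in> nbN V E b11) \<noteq> (b22 \<in> nbN V E b11)" "(b31 \<in> nbN V E b11) \<noteq> (b32 \<in> nbN V E b11)"
    using pet_gen[OF C Nx(1) N1(1) N2(1) N3(1)] VV dl by auto
  have N2': "nbN V E a2 = {x,b22,b21}" using N2 by auto
  have N3': "nbN V E a3 = {x,b32,b31}" using N3 by auto
  show ?thesis
  proof (cases "b21 \<in> nbN V E b11")
    case T2: True
    show ?thesis
    proof (cases "b31 \<in> nbN V E b11")
      case True
      then show ?thesis using pet_final[OF C Nx(1) N1(1) N2(1) N3(1) VV dl] T2 Nmem by auto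
    next
      case False
      then have "b32 \<in> nbN V E b11" using g by blast
      moreover have "V = {x,a1,a2,a3,b11,b12,b21,b22,b32,b31}" using VV by auto
      moreover have "distinct [x,a1,a2,a3,b11,b12,b21,b22,b32,b31]" using dl by auto
      ultimately show ?thesis using pet_final[OF C Nx(1) N1(1) N2(1) N3'] T2 Nmem by auto
    qed
  next
    case F2: False
    then have h2: "b22 \<in> nbN V E b11" using g by blast
    show ?thesis
    proof (cases "b31 \<in> nbN V E b11")
      case True
      moreover have "V = {x,a1,a2,a3,b11,b12,b22,b21,b31,b32}" using VV by auto
      moreover have "distinct [x,a1,a2,a3,b11,b12,b22,b21,b31,b32]" using dl by auto
      ultimately show ?thesis using pet_final[OF C Nx(1) N1(1) N2' N3(1)] h2 Nmem by auto
    next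
      case False
      then have "b32 \<in> nbN V E b11" using g by blast
      moreover have "V = {x,a1,a2,a3,b11,b12,b22,b21,b32,b31}" using VV by auto
      moreover have "distinct [x,a1,a2,a3,b11,b12,b22,b21,b32,b31]" using dl by auto
      ultimately show ?thesis using pet_final[OF C Nx(1) N1(1) N2' N3'] h2 Nmem by auto
    qed
  qed
qed

context Cub begin
lemma Nsym': "u \<in> nbN V E w \<longleftrightarrow> w \<in> nbN V E u"
  by (simp add: Nmem insert_commute)
end

lemma hea_gen:
  assumes C: "Cub V E 5"
  and Nx: "nbN V E x = {y,ai,aj}" and Ny: "nbN V E y = {x,b1,b2}"
  and Ni: "nbN V E ai = {x,c,c'}" and Nj: "nbN V E aj = {x,e1,e2}"
  and Nb1: "nbN V E b1 = {y,d1,d2}" and Nb2: "nbN V E b2 = {y,d3,d4}"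
  and VV: "V \<subseteq> {x,y,ai,aj,b1,b2,c,c',e1,e2,d1,d2,d3,d4}"
  and dl: "distinct [x,y,ai,aj,b1,b2,c,c',e1,e2,d1,d2,d3,d4]"
  shows "(d1 \<in> nbN V E c) \<noteq> (d2 \<in> nbN V E c)" "(d3 \<in> nbN V E c) \<noteq> (d4 \<in> nbN V E c)"
    "nbN V E c \<subseteq> {ai,d1,d2,d3,d4}"
proof -
  interpret Cub V E 5 by (rule C)
  have "y \<in> nbN V E x" "ai \<in> nbN V E x" "aj \<in> nbN V E x" "b1 \<in> nbN V E y" "b2 \<in> nbN V E y"
    "c \<in> nbN V E ai" "c' \<in> nbN V E ai" "e1 \<in> nbN V E aj" "e2 \<in> nbN V E aj"
    "d1 \<in> nbN V E b1" "d2 \<in> nbN V E b1" "d3 \<in> nbN V E b2" "d4 \<in> nbN V E b2"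
    by (simp_all add: Nx Ny Ni Nj Nb1 Nb2)
  then have e: "{x,y} \<in> E" "{x,ai} \<in> E" "{x,aj} \<in> E" "{y,b1} \<in> E" "{y,b2} \<in> E"
    "{ai,c} \<in> E" "{ai,c'} \<in> E" "{aj,e1} \<in> E" "{aj,e2} \<in> E"
    "{b1,d1} \<in> E" "{b1,d2} \<in> E" "{b2,d3} \<in> E" "{b2,d4} \<in> E"
    unfolding Nmem by simp_all
  note es = e esym[OF e(1)] esym[OF e(2)] esym[OF e(3)] esym[OF e(4)] esym[OF e(5)]
    esym[OF e(6)] esym[OF e(7)] esym[OF e(8)] esym[OF e(9)] esym[OF e(10)] esym[OF e(11)]
    esym[OF e(12)] esym[OF e(13)]
  have ne: "c \<noteq> x" "c \<noteq> y" "c \<noteq> ai" "c \<noteq> aj" "c \<noteq> b1" "c \<noteq> b2" "c \<noteq> c'" "b1 \<noteq> x" "b2 \<noteq> x"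
    "e1 \<noteq> x" "e2 \<noteq> x" "ai \<noteq> aj" "d1 \<noteq> d2" "d3 \<noteq> d4" "ai \<noteq> y" "aj \<noteq> y" "c' \<noteq> ai"
    "b1 \<noteq> y" "b2 \<noteq> y" "x \<noteq> y"
    using dl by auto
  have cV: "c \<in> V" using e sg_edge[OF sg] by blast
  have sub: "nbN V E c \<subseteq> {ai,d1,d2,d3,d4}"
  proof
    fix w assume w: "w \<in> nbN V E c"
    then have wb: "{c,w} \<in> E" "w \<in> V" "w \<noteq> c" using Nmem sg_edge[OF sg] by blast+
    have wb': "{w,c} \<in> E" using esym[OF wb(1)] .
    have "w \<noteq> x" using excl[of "[c,x]" "[c,ai,x]"] wb wb' es ne by auto
    moreover have "w \<noteq> y" using excl[of "[c,y,x]" "[c,ai,x]"] wb wb' es ne by auto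
    moreover have "w \<noteq> aj" using excl[of "[c,aj,x]" "[c,ai,x]"] wb wb' es ne by auto
    moreover have "w \<noteq> b1" using excl[of "[c,b1,y,x]" "[c,ai,x]"] wb wb' es ne by auto
    moreover have "w \<noteq> b2" using excl[of "[c,b2,y,x]" "[c,ai,x]"] wb wb' es ne by auto
    moreover have "w \<noteq> c'" using excl[of "[c',c,ai]" "[c',ai]"] wb wb' es ne by auto
    moreover have "w \<noteq> e1" using excl[of "[c,e1,aj,x]" "[c,ai,x]"] wb wb' es ne by auto
    moreover have "w \<noteq> e2" using excl[of "[c,e2,aj,x]" "[c,ai,x]"] wb wb' es ne by auto
    ultimately show "w \<in> {ai,d1,d2,d3,d4}" using wb VV by auto
  qed
  have n1: "\<not> (d1 \<in> nbN V E c \<and> d2 \<in> nbN V E c)"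
  proof
    assume "d1 \<in> nbN V E c \<and> d2 \<in> nbN V E c"
    then have "{c,d1} \<in> E" "{c,d2} \<in> E" using Nmem by auto
    then show False using excl[of "[c,d1,b1]" "[c,d2,b1]"] es ne esym by auto
  qed
  have n2: "\<not> (d3 \<in> nbN V E c \<and> d4 \<in> nbN V E c)"
  proof
    assume "d3 \<in> nbN V E c \<and> d4 \<in> nbN V E c"
    then have "{c,d3} \<in> E" "{c,d4} \<in> E" using Nmem by auto
    then show False using excl[of "[c,d3,b2]" "[c,d4,b2]"] es ne esym by auto
  qed
  have "d1 \<in> nbN V E c \<or> d2 \<in> nbN V E c"
  proof (rule ccontr)
    assume "\<not> ?thesis"
    then have "nbN V E c \<subseteq> {ai,d3,d4}" using sub by auto
    then have "nbN V E c = {ai,d3,d4}" using sub3[OF cV] by blast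
    then show False using n2 by auto
  qed
  then show "(d1 \<in> nbN V E c) \<noteq> (d2 \<in> nbN V E c)" using n1 by blast
  have "d3 \<in> nbN V E c \<or> d4 \<in> nbN V E c"
  proof (rule ccontr)
    assume "\<not> ?thesis"
    then have "nbN V E c \<subseteq> {ai,d1,d2}" using sub by auto
    then have "nbN V E c = {ai,d1,d2}" using sub3[OF cV] by blast
    then show False using n1 by auto
  qed
  then show "(d3 \<in> nbN V E c) \<noteq> (d4 \<in> nbN V E c)" using n2 by blast
  show "nbN V E c \<subseteq> {ai,d1,d2,d3,d4}" by (rule sub)
qed


definition "heaA = [[1,2,3],[0,4,5],[0,6,7],[0,8,9],[1,10,11],[1,12,13],[2,10,12],[2,11,13],[3,10,13],[3,11,12],
  [4,6,8],[4,7,9],[5,6,9],[5,7,8::nat]]"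
definition "HeaE = adjE heaA"

lemma hea_final:
  fixes V :: "nat set"
  assumes C: "Cub V E 5"
  and Nx: "nbN V E x = {y,a1,a2}" and Ny: "nbN V E y = {x,b1,b2}"
  and Na1: "nbN V E a1 = {x,c11,c12}" and Na2: "nbN V E a2 = {x,c21,c22}"
  and Nb1: "nbN V E b1 = {y,d11,d12}" and Nb2: "nbN V E b2 = {y,d21,d22}"
  and VV: "V = {x,y,a1,a2,b1,b2,c11,c12,c21,c22,d11,d12,d21,d22}"
  and dl: "distinct [x,y,a1,a2,b1,b2,c11,c12,c21,c22,d11,d12,d21,d22]"
  and h1: "{c11,d11} \<in> E" and h2: "{c11,d21} \<in> E" and h3: "{c21,d11} \<in> E"
  shows "graph_iso V E {0..<14} HeaE"
proof -
  interpret Cub V E 5 by (rule C)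
  have Nx': "nbN V E x = {y,a2,a1}" using Nx by auto
  have Ny': "nbN V E y = {x,b2,b1}" using Ny by auto
  have Na1': "nbN V E a1 = {x,c12,c11}" using Na1 by auto
  have Na2': "nbN V E a2 = {x,c22,c21}" using Na2 by auto
  have Nb1': "nbN V E b1 = {y,d12,d11}" using Nb1 by auto
  have Nb2': "nbN V E b2 = {y,d22,d21}" using Nb2 by auto
  note P = hea_gen[OF C]
  have V1: "V \<subseteq> {x,y,a1,a2,b1,b2,c11,c12,c21,c22,d11,d12,d21,d22}" using VV by simp
  have V2: "V \<subseteq> {x,y,a1,a2,b1,b2,c12,c11,c21,c22,d11,d12,d21,d22}" using VV by auto
  have V3: "V \<subseteq> {x,y,a2,a1,b1,b2,c21,c22,c11,c12,d11,d12,d21,d22}" using VV by auto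
  have V4: "V \<subseteq> {x,y,a2,a1,b1,b2,c22,c21,c11,c12,d11,d12,d21,d22}" using VV by auto
  have V5: "V \<subseteq> {y,x,b1,b2,a1,a2,d11,d12,d21,d22,c11,c12,c21,c22}" using VV by auto
  have V6: "V \<subseteq> {y,x,b2,b1,a1,a2,d21,d22,d11,d12,c11,c12,c21,c22}" using VV by auto
  have D2: "distinct [x,y,a1,a2,b1,b2,c12,c11,c21,c22,d11,d12,d21,d22]" using dl by auto
  have D3: "distinct [x,y,a2,a1,b1,b2,c21,c22,c11,c12,d11,d12,d21,d22]" using dl by auto
  have D4: "distinct [x,y,a2,a1,b1,b2,c22,c21,c11,c12,d11,d12,d21,d22]" using dl by auto
  have D5: "distinct [y,x,b1,b2,a1,a2,d11,d12,d21,d22,c11,c12,c21,c22]" using dl by auto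
  have D6: "distinct [y,x,b2,b1,a1,a2,d21,d22,d11,d12,c11,c12,c21,c22]" using dl by auto
  have gc11: "(d11 \<in> nbN V E c11) \<noteq> (d12 \<in> nbN V E c11)" "(d21 \<in> nbN V E c11) \<noteq> (d22 \<in> nbN V E c11)"
    "nbN V E c11 \<subseteq> {a1,d11,d12,d21,d22}"
    using P[OF Nx Ny Na1 Na2 Nb1 Nb2 V1 dl] by blast+
  have gc12: "(d11 \<in> nbN V E c12) \<noteq> (d12 \<in> nbN V E c12)" "(d21 \<in> nbN V E c12) \<noteq> (d22 \<in> nbN V E c12)"
    "nbN V E c12 \<subseteq> {a1,d11,d12,d21,d22}"
    using P[OF Nx Ny Na1' Na2 Nb1 Nb2 V2 D2] by blast+
  have gc21: "(d11 \<in> nbN V E c21) \<noteq> (d12 \<in> nbN V E c21)" "(d21 \<in> nbN V E c21) \<noteq> (d22 \<in> nbN V E c21)"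
    "nbN V E c21 \<subseteq> {a2,d11,d12,d21,d22}"
    using P[OF Nx' Ny Na2 Na1 Nb1 Nb2 V3 D3] by blast+
  have gc22: "(d11 \<in> nbN V E c22) \<noteq> (d12 \<in> nbN V E c22)" "(d21 \<in> nbN V E c22) \<noteq> (d22 \<in> nbN V E c22)"
    "nbN V E c22 \<subseteq> {a2,d11,d12,d21,d22}"
    using P[OF Nx' Ny Na2' Na1 Nb1 Nb2 V4 D4] by blast+
  have gd11: "(c11 \<in> nbN V E d11) \<noteq> (c12 \<in> nbN V E d11)" "(c21 \<in> nbN V E d11) \<noteq> (c22 \<in> nbN V E d11)"
    using P[OF Ny Nx Nb1 Nb2 Na1 Na2 V5 D5] by blast+
  have gd21: "(c11 \<in> nbN V E d21) \<noteq> (c12 \<in> nbN V E d21)" "(c21 \<in> nbN V E d21) \<noteq> (c22 \<in> nbN V E d21)"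
    using P[OF Ny' Nx Nb2 Nb1 Na1 Na2 V6 D6] by blast+
  have inV: "c11 \<in> V" "c12 \<in> V" "c21 \<in> V" "c22 \<in> V" "d11 \<in> V" "d12 \<in> V" "d21 \<in> V" "d22 \<in> V"
    using VV by simp_all
  have m: "d11 \<in> nbN V E c11" "d21 \<in> nbN V E c11" "d11 \<in> nbN V E c21"
    using h1 h2 h3 Nmem by auto
  have m': "c11 \<in> nbN V E d11" "c11 \<in> nbN V E d21" "c21 \<in> nbN V E d11" using m Nsym' by blast+
  have NC11: "nbN V E c11 = {a1,d11,d21}"
    using sub3[OF inV(1), of a1 d11 d21] gc11 m by blast
  have "c12 \<notin> nbN V E d11" using gd11(1) m' by blast
  then have "d12 \<in> nbN V E c12" using gc12(1) Nsym' by blast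
  have "c12 \<notin> nbN V E d21" using gd21(1) m' by blast
  then have "d22 \<in> nbN V E c12" using gc12(2) Nsym' by blast
  have NC12: "nbN V E c12 = {a1,d12,d22}"
    using sub3[OF inV(2), of a1 d12 d22] gc12(3) \<open>d12 \<in> nbN V E c12\<close> \<open>d22 \<in> nbN V E c12\<close>
      \<open>c12 \<notin> nbN V E d11\<close> \<open>c12 \<notin> nbN V E d21\<close> Nsym' by blast
  have "c22 \<notin> nbN V E d11" using gd11(2) m' by blast
  then have "d12 \<in> nbN V E c22" using gc22(1) Nsym' by blast
  have ne: "c21 \<noteq> c11" "d11 \<noteq> d21" using dl by auto
  have "d21 \<notin> nbN V E c21"
  proof
    assume "d21 \<in> nbN V E c21"
    then have "{c21,d21} \<in> E" "{d21,c11} \<in> E" "{c21,d11} \<in> E" "{d11,c11} \<in> E"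
      using Nmem Nsym' m by blast+
    then show False using excl[of "[c21,d11,c11]" "[c21,d21,c11]"] ne by auto
  qed
  then have "d22 \<in> nbN V E c21" using gc21(2) by blast
  have NC21: "nbN V E c21 = {a2,d11,d22}"
    using sub3[OF inV(3), of a2 d11 d22] gc21(3) m \<open>d22 \<in> nbN V E c21\<close> \<open>d21 \<notin> nbN V E c21\<close>
      gc21(1) by blast
  have "c21 \<notin> nbN V E d21" using \<open>d21 \<notin> nbN V E c21\<close> Nsym' by blast
  then have "c22 \<in> nbN V E d21" using gd21(2) by blast
  then have "d21 \<in> nbN V E c22" using Nsym' by blast
  have NC22: "nbN V E c22 = {a2,d12,d21}"
    using sub3[OF inV(4), of a2 d12 d21] gc22(3) \<open>d12 \<in> nbN V E c22\<close> \<open>d21 \<in> nbN V E c22\<close>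
      gc22(1) gc22(2) by blast
  have dd: "b1 \<noteq> c11" "b1 \<noteq> c21" "c11 \<noteq> c21" "b1 \<noteq> c12" "b1 \<noteq> c22" "c12 \<noteq> c22"
    "b2 \<noteq> c11" "b2 \<noteq> c22" "c11 \<noteq> c22" "b2 \<noteq> c12" "b2 \<noteq> c21" "c12 \<noteq> c21" using dl by auto
  have ND11: "nbN V E d11 = {b1,c11,c21}"
  proof -
    have "b1 \<in> nbN V E d11" "c11 \<in> nbN V E d11" "c21 \<in> nbN V E d11"
      using Nb1 m' by (auto simp: Nsym'[of b1])
    then show ?thesis using N3[OF inV(5)] dd Nmem by simp
  qed
  have ND12: "nbN V E d12 = {b1,c12,c22}"
  proof -
    have "b1 \<in> nbN V E d12" "c12 \<in> nbN V E d12" "c22 \<in> nbN V E d12"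
      using Nb1 NC12 NC22 by (auto simp: Nsym'[of _ d12])
    then show ?thesis using N3[OF inV(6)] dd Nmem by simp
  qed
  have ND21: "nbN V E d21 = {b2,c11,c22}"
  proof -
    have "b2 \<in> nbN V E d21" "c11 \<in> nbN V E d21" "c22 \<in> nbN V E d21"
      using Nb2 NC11 NC22 by (auto simp: Nsym'[of _ d21])
    then show ?thesis using N3[OF inV(7)] dd Nmem by simp
  qed
  have ND22: "nbN V E d22 = {b2,c12,c21}"
  proof -
    have "b2 \<in> nbN V E d22" "c12 \<in> nbN V E d22" "c21 \<in> nbN V E d22"
      using Nb2 NC12 NC21 by (auto simp: Nsym'[of _ d22])
    then show ?thesis using N3[OF inV(8)] dd Nmem by simp
  qed
  have "graph_iso V E {0..<length [x,y,a1,a2,b1,b2,c11,c12,c21,c22,d11,d12,d21,d22]} (adjE heaA)"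
    apply (rule iso_adj[OF sg dl])
       apply (simp add: VV)
      apply (simp add: heaA_def)
     apply (simp add: All_less_Suc eval_nat_numeral heaA_def Nx Ny Na1 Na2 Nb1 Nb2 NC11 NC12 NC21 NC22
        ND11 ND12 ND21 ND22 insert_commute)
    apply (simp add: All_less_Suc eval_nat_numeral heaA_def)
    done
  then show ?thesis by (simp add: eval_nat_numeral HeaE_def)
qed


lemma Hea:
  fixes V :: "nat set"
  assumes C: "Cub V E 5" and cV: "card V = 14"
  shows "graph_iso V E {0..<14} HeaE"
proof -
  interpret Cub V E 5 by (rule C)
  have "V \<noteq> {}" using cV by auto
  then obtain x where x: "x \<in> V" by blast
  obtain y a1 a2 where Nx: "nbN V E x = {y,a1,a2}" "y \<noteq> a1" "y \<noteq> a2" "a1 \<noteq> a2"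
    using getN0[OF x] by blast
  have "y \<in> nbN V E x" "a1 \<in> nbN V E x" "a2 \<in> nbN V E x" by (simp_all add: Nx)
  then have ex: "{x,y} \<in> E" "{x,a1} \<in> E" "{x,a2} \<in> E" unfolding Nmem .
  have xa: "y \<in> V" "a1 \<in> V" "a2 \<in> V" "x \<noteq> y" "x \<noteq> a1" "x \<noteq> a2" using sg_edge[OF sg] ex by blast+
  obtain b1 b2 where Ny: "nbN V E y = {x,b1,b2}" "x \<noteq> b1" "x \<noteq> b2" "b1 \<noteq> b2"
    using getN[OF xa(1) esym[OF ex(1)]] by blast
  have "b1 \<in> nbN V E y" "b2 \<in> nbN V E y" by (simp_all add: Ny)
  then have ey: "{y,b1} \<in> E" "{y,b2} \<in> E" unfolding Nmem .
  have yb: "b1 \<in> V" "b2 \<in> V" "y \<noteq> b1" "y \<noteq> b2" using sg_edge[OF sg] ey by blast+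
  obtain c11 c12 where Na1: "nbN V E a1 = {x,c11,c12}" "x \<noteq> c11" "x \<noteq> c12" "c11 \<noteq> c12"
    using getN[OF xa(2) esym[OF ex(2)]] by blast
  obtain c21 c22 where Na2: "nbN V E a2 = {x,c21,c22}" "x \<noteq> c21" "x \<noteq> c22" "c21 \<noteq> c22"
    using getN[OF xa(3) esym[OF ex(3)]] by blast
  obtain d11 d12 where Nb1: "nbN V E b1 = {y,d11,d12}" "y \<noteq> d11" "y \<noteq> d12" "d11 \<noteq> d12"
    using getN[OF yb(1) esym[OF ey(1)]] by blast
  obtain d21 d22 where Nb2: "nbN V E b2 = {y,d21,d22}" "y \<noteq> d21" "y \<noteq> d22" "d21 \<noteq> d22"
    using getN[OF yb(2) esym[OF ey(2)]] by blast
  have "c11 \<in> nbN V E a1" "c12 \<in> nbN V E a1" "c21 \<in> nbN V E a2" "c22 \<in> nbN V E a2"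
    "d11 \<in> nbN V E b1" "d12 \<in> nbN V E b1" "d21 \<in> nbN V E b2" "d22 \<in> nbN V E b2"
    by (simp_all add: Na1 Na2 Nb1 Nb2)
  then have e2: "{a1,c11} \<in> E" "{a1,c12} \<in> E" "{a2,c21} \<in> E" "{a2,c22} \<in> E"
    "{b1,d11} \<in> E" "{b1,d12} \<in> E" "{b2,d21} \<in> E" "{b2,d22} \<in> E" unfolding Nmem .
  note es = ex ey e2 esym[OF ex(1)] esym[OF ex(2)] esym[OF ex(3)] esym[OF ey(1)] esym[OF ey(2)]
    esym[OF e2(1)] esym[OF e2(2)] esym[OF e2(3)] esym[OF e2(4)]
    esym[OF e2(5)] esym[OF e2(6)] esym[OF e2(7)] esym[OF e2(8)]
  have d1: "distinct (map hd [[x],[a1,x],[a2,x],[c11,a1,x],[c12,a1,x],[c21,a2,x],[c22,a2,x]])"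
    apply (rule hd_distinct[of _ x])
    using es Nx Na1 Na2 xa by auto
  have d2: "distinct (map hd [[y],[b1,y],[b2,y],[d11,b1,y],[d12,b1,y],[d21,b2,y],[d22,b2,y]])"
    apply (rule hd_distinct[of _ y])
    using es Ny Nb1 Nb2 yb by auto
  have d3: "set (map hd [[x,y],[a1,x,y],[a2,x,y],[c11,a1,x,y],[c12,a1,x,y],[c21,a2,x,y],[c22,a2,x,y]]) \<inter>
      set (map hd [[y],[b1,y],[b2,y],[d11,b1,y],[d12,b1,y],[d21,b2,y],[d22,b2,y]]) = {}"
    apply (rule hd_disj[of _ y 4 _ 3])
    using es Nx Ny Na1 Na2 Nb1 Nb2 xa yb by auto
  have dl: "distinct [x,y,a1,a2,b1,b2,c11,c12,c21,c22,d11,d12,d21,d22]"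
    using d1 d2 d3 by auto
  have inV: "set [x,y,a1,a2,b1,b2,c11,c12,c21,c22,d11,d12,d21,d22] \<subseteq> V"
    using x xa yb e2 sg_edge[OF sg] by auto
  have VV: "V = {x,y,a1,a2,b1,b2,c11,c12,c21,c22,d11,d12,d21,d22}" using Vlist[OF dl inV] cV by simp
  note P = hea_gen[OF C]
  have Nb1': "nbN V E b1 = {y,d12,d11}" using Nb1 by auto
  have Nb2': "nbN V E b2 = {y,d22,d21}" using Nb2 by auto
  have Na2': "nbN V E a2 = {x,c22,c21}" using Na2 by auto
  have gC: "(d11 \<in> nbN V E c11) \<noteq> (d12 \<in> nbN V E c11)" "(d21 \<in> nbN V E c11) \<noteq> (d22 \<in> nbN V E c11)"
    using P[OF Nx(1) Ny(1) Na1(1) Na2(1) Nb1(1) Nb2(1) _ dl] VV by auto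
  have gD11: "(c21 \<in> nbN V E d11) \<noteq> (c22 \<in> nbN V E d11)"
  proof -
    have "V \<subseteq> {y,x,b1,b2,a1,a2,d11,d12,d21,d22,c11,c12,c21,c22}" using VV by auto
    moreover have "distinct [y,x,b1,b2,a1,a2,d11,d12,d21,d22,c11,c12,c21,c22]" using dl by auto
    ultimately show ?thesis using P(2)[OF Ny(1) Nx(1) Nb1(1) Nb2(1) Na1(1) Na2(1)] by blast
  qed
  have gD12: "(c21 \<in> nbN V E d12) \<noteq> (c22 \<in> nbN V E d12)"
  proof -
    have "V \<subseteq> {y,x,b1,b2,a1,a2,d12,d11,d21,d22,c11,c12,c21,c22}" using VV by auto
    moreover have "distinct [y,x,b1,b2,a1,a2,d12,d11,d21,d22,c11,c12,c21,c22]" using dl by auto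
    ultimately show ?thesis using P(2)[OF Ny(1) Nx(1) Nb1' Nb2(1) Na1(1) Na2(1)] by blast
  qed
  show ?thesis
  proof (cases "d11 \<in> nbN V E c11")
    case cD1: True
    note hD = cD1
    show ?thesis
    proof (cases "d21 \<in> nbN V E c11")
      case cF: True
      note hF = cF
      show ?thesis
      proof (cases "c21 \<in> nbN V E d11")
        case cG: True
        note hG = cG
        have "V = {x,y,a1,a2,b1,b2,c11,c12,c21,c22,d11,d12,d21,d22}" using VV by auto
        moreover have "distinct [x,y,a1,a2,b1,b2,c11,c12,c21,c22,d11,d12,d21,d22]" using dl by auto
        moreover have "{c11,d11} \<in> E" "{c11,d21} \<in> E" "{c21,d11} \<in> E"
          using hD hF hG Nmem esym by blast+
        ultimately show ?thesis using hea_final[OF C Nx(1) Ny(1) Na1(1) Na2(1) Nb1(1) Nb2(1)] by blast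
      next
        case cG: False
        then have hG: "c22 \<in> nbN V E d11" using gD11 by blast
        have "V = {x,y,a1,a2,b1,b2,c11,c12,c22,c21,d11,d12,d21,d22}" using VV by auto
        moreover have "distinct [x,y,a1,a2,b1,b2,c11,c12,c22,c21,d11,d12,d21,d22]" using dl by auto
        moreover have "{c11,d11} \<in> E" "{c11,d21} \<in> E" "{c22,d11} \<in> E"
          using hD hF hG Nmem esym by blast+
        ultimately show ?thesis using hea_final[OF C Nx(1) Ny(1) Na1(1) Na2' Nb1(1) Nb2(1)] by blast
      qed
    next
      case cF: False
      then have hF: "d22 \<in> nbN V E c11" using gC(2) by blast
      show ?thesis
      proof (cases "c21 \<in> nbN V E d11")
        case cG: True
        note hG = cG
        have "V = {x,y,a1,a2,b1,b2,c11,c12,c21,c22,d11,d12,d22,d21}" using VV by auto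
        moreover have "distinct [x,y,a1,a2,b1,b2,c11,c12,c21,c22,d11,d12,d22,d21]" using dl by auto
        moreover have "{c11,d11} \<in> E" "{c11,d22} \<in> E" "{c21,d11} \<in> E"
          using hD hF hG Nmem esym by blast+
        ultimately show ?thesis using hea_final[OF C Nx(1) Ny(1) Na1(1) Na2(1) Nb1(1) Nb2'] by blast
      next
        case cG: False
        then have hG: "c22 \<in> nbN V E d11" using gD11 by blast
        have "V = {x,y,a1,a2,b1,b2,c11,c12,c22,c21,d11,d12,d22,d21}" using VV by auto
        moreover have "distinct [x,y,a1,a2,b1,b2,c11,c12,c22,c21,d11,d12,d22,d21]" using dl by auto
        moreover have "{c11,d11} \<in> E" "{c11,d22} \<in> E" "{c22,d11} \<in> E"
          using hD hF hG Nmem esym by blast+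
        ultimately show ?thesis using hea_final[OF C Nx(1) Ny(1) Na1(1) Na2' Nb1(1) Nb2'] by blast
      qed
    qed
  next
    case cD1: False
    then have hD: "d12 \<in> nbN V E c11" using gC(1) by blast
    show ?thesis
    proof (cases "d21 \<in> nbN V E c11")
      case cF: True
      note hF = cF
      show ?thesis
      proof (cases "c21 \<in> nbN V E d12")
        case cG: True
        note hG = cG
        have "V = {x,y,a1,a2,b1,b2,c11,c12,c21,c22,d12,d11,d21,d22}" using VV by auto
        moreover have "distinct [x,y,a1,a2,b1,b2,c11,c12,c21,c22,d12,d11,d21,d22]" using dl by auto
        moreover have "{c11,d12} \<in> E" "{c11,d21} \<in> E" "{c21,d12} \<in> E"
          using hD hF hG Nmem esym by blast+
        ultimately show ?thesis using hea_final[OF C Nx(1) Ny(1) Na1(1) Na2(1) Nb1' Nb2(1)] by blast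
      next
        case cG: False
        then have hG: "c22 \<in> nbN V E d12" using gD12 by blast
        have "V = {x,y,a1,a2,b1,b2,c11,c12,c22,c21,d12,d11,d21,d22}" using VV by auto
        moreover have "distinct [x,y,a1,a2,b1,b2,c11,c12,c22,c21,d12,d11,d21,d22]" using dl by auto
        moreover have "{c11,d12} \<in> E" "{c11,d21} \<in> E" "{c22,d12} \<in> E"
          using hD hF hG Nmem esym by blast+
        ultimately show ?thesis using hea_final[OF C Nx(1) Ny(1) Na1(1) Na2' Nb1' Nb2(1)] by blast
      qed
    next
      case cF: False
      then have hF: "d22 \<in> nbN V E c11" using gC(2) by blast
      show ?thesis
      proof (cases "c21 \<in> nbN V E d12")
        case cG: True
        note hG = cG
        have "V = {x,y,a1,a2,b1,b2,c11,c12,c21,c22,d12,d11,d22,d21}" using VV by auto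
        moreover have "distinct [x,y,a1,a2,b1,b2,c11,c12,c21,c22,d12,d11,d22,d21]" using dl by auto
        moreover have "{c11,d12} \<in> E" "{c11,d22} \<in> E" "{c21,d12} \<in> E"
          using hD hF hG Nmem esym by blast+
        ultimately show ?thesis using hea_final[OF C Nx(1) Ny(1) Na1(1) Na2(1) Nb1' Nb2'] by blast
      next
        case cG: False
        then have hG: "c22 \<in> nbN V E d12" using gD12 by blast
        have "V = {x,y,a1,a2,b1,b2,c11,c12,c22,c21,d12,d11,d22,d21}" using VV by auto
        moreover have "distinct [x,y,a1,a2,b1,b2,c11,c12,c22,c21,d12,d11,d22,d21]" using dl by auto
        moreover have "{c11,d12} \<in> E" "{c11,d22} \<in> E" "{c22,d12} \<in> E"
          using hD hF hG Nmem esym by blast+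
        ultimately show ?thesis using hea_final[OF C Nx(1) Ny(1) Na1(1) Na2' Nb1' Nb2'] by blast
      qed
    qed
  qed
qed

lemma pow_bound1: "3 \<le> R \<Longrightarrow> 8 * R \<le> 3 * (2::nat)^R + 2"
proof (induction R rule: nat_induct_at_least)
  case base then show ?case by simp
next
  case (Suc n) then show ?case by simp
qed

lemma pow_bound2: "3 \<le> R \<Longrightarrow> 8 * R + 2 \<le> (2::nat)^(R+2)"
proof (induction R rule: nat_induct_at_least)
  case base then show ?case by simp
next
  case (Suc n) then show ?case by simp
qed

context G begin

lemma cubic: assumes "2 * card E = 3 * card V" shows "\<forall>u\<in>V. card (nbN V E u) = 3"
proof -
  have ge: "\<And>u. u \<in> V \<Longrightarrow> 3 \<le> card (nbN V E u)" using cardN by blast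
  have "(\<Sum>u\<in>V. card (nbN V E u) - 3) = (\<Sum>u\<in>V. card (nbN V E u)) - (\<Sum>u\<in>V. 3)"
    by (rule sum_subtractf_nat) (use ge in auto)
  also have "\<dots> = 0" using handshake assms by simp
  finally have "\<forall>u\<in>V. card (nbN V E u) - 3 = 0" using finV by simp
  then show ?thesis using ge by fastforce
qed

lemma sum3: "3 * card V \<le> 2 * card E"
proof -
  have "(\<Sum>u\<in>V. 3) \<le> (\<Sum>u\<in>V. card (nbN V E u))" by (rule sum_mono) (use cardN in auto)
  then show ?thesis using handshake by simp
qed

end

theorem mainTheorem10:
  "\<exists>exc :: (nat set \<times> nat set set) list. length exc \<le> 3 \<and>
     (\<forall>(V :: nat set) (E :: nat set set).
        simple_graph V E \<and> two_connected V E \<and> genus V E \<ge> 4 \<and>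
        (\<forall>u\<in>V. degree V E u \<ge> 3)
        \<longrightarrow> int (girth V E) \<le> (genus V E + 3) div 2
            \<or> (\<exists>H \<in> set exc. graph_iso V E (fst H) (snd H)))"
proof (rule exI[of _ "[({0..<6}, K33E), ({0..<10}, PetE), ({0..<14}, HeaE)]"], intro conjI allI impI)
  show "length [({0..<6::nat}, K33E), ({0..<10}, PetE), ({0..<14}, HeaE)] \<le> 3" by simp
next
  fix V :: "nat set" and E
  assume h: "simple_graph V E \<and> two_connected V E \<and> genus V E \<ge> 4 \<and> (\<forall>u\<in>V. degree V E u \<ge> 3)"
  interpret G V E using h by (unfold_locales) auto
  have Vne: "V \<noteq> {}" using h unfolding two_connected_def by auto
  define k where "k = girth V E"
  have ex: "\<exists>k cs. is_cycle V E cs \<and> length cs = k" using has_cycle[OF Vne] by blast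
  obtain cs0 where cs0: "is_cycle V E cs0" "length cs0 = k"
    unfolding k_def girth_def using LeastI_ex[OF ex] by blast
  have k3: "3 \<le> k" using cs0 unfolding is_cycle_def by simp
  have nck: "nocyc V E (k - 1)"
    unfolding nocyc_def
  proof (intro allI impI)
    fix cs assume "is_cycle V E cs"
    then have "k \<le> length cs" unfolding k_def girth_def by (blast intro: Least_le)
    then show "k - 1 < length cs" using k3 by simp
  qed
  have nc: "nocyc V E L" if "L \<le> k - 1" for L using nck that unfolding nocyc_def by fastforce
  define v where "v = card V"
  define e where "e = card E"
  have g: "genus V E = 1 - int v + int e" unfolding genus_def v_def e_def by simp
  have g4: "4 \<le> genus V E" using h by simp
  have ve: "3 * v \<le> 2 * e" using sum3 unfolding v_def e_def .
  obtain x where x: "x \<in> V" using Vne by blast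
  have "3 \<le> card (nbN V E x)" using cardN[OF x] .
  then obtain y where y: "y \<in> nbN V E x" by (metis card.empty ex_in_conv not_numeral_le_zero)
  then have xy: "{x,y} \<in> E" by (simp add: nbN_def)
  let ?exc = "[({0..<6::nat}, K33E), ({0..<10}, PetE), ({0..<14}, HeaE)]"
  show "int (girth V E) \<le> (genus V E + 3) div 2 \<or> (\<exists>H\<in>set ?exc. graph_iso V E (fst H) (snd H))"
  proof (cases "int k \<le> (genus V E + 3) div 2")
    case True then show ?thesis unfolding k_def by simp
  next
    case False
    note F = False[unfolded g]
    show ?thesis
    proof (cases "odd k")
      case True
      then obtain R where R0: "k = 2*R+1" by (rule oddE)
      then have R: "k = 2*R+1" "1 \<le> R" using k3 by simp_all
      have mo: "3 * 2^R \<le> v + 2" using odd_moore[OF x nc[of "2*R"]] R unfolding v_def by simp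
      consider "R = 1" | "R = 2" | "3 \<le> R" using R by linarith
      then show ?thesis
      proof cases
        case 1 then show ?thesis using F R g4 g by simp
      next
        case 2
        then have "10 \<le> v" using mo by simp
        then have vv: "v = 10" "2 * e = 3 * v" using F R 2 ve by simp_all
        have "Cub V E 4" using cubic[of] vv nc[of 4] R 2 unfolding v_def e_def
          by unfold_locales auto
        then have "graph_iso V E {0..<10} PetE" using Pet vv unfolding v_def by blast
        then show ?thesis by simp
      next
        case 3
        have "8 * R \<le> v + 4" using pow_bound1[OF 3] mo by linarith
        then show ?thesis using F R ve by simp
      qed
    next
      case False
      then obtain R0 where R0: "k = 2*R0" by (auto elim: evenE)
      define R where "R = R0 - 1"
      have R: "k = 2*R+2" "1 \<le> R" using k3 R0 unfolding R_def by simp_all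
      have mo: "2^(R+2) \<le> v + 2" using even_moore[OF x xy nc[of "2*R+1"]] R unfolding v_def by simp
      consider "R = 1" | "R = 2" | "3 \<le> R" using R by linarith
      then show ?thesis
      proof cases
        case 1
        then have "6 \<le> v" using mo by simp
        then have vv: "v = 6" "2 * e = 3 * v" using F R 1 ve by simp_all
        have "Cub V E 3" using cubic[of] vv nc[of 3] R 1 unfolding v_def e_def
          by unfold_locales auto
        then have "graph_iso V E {0..<6} K33E" using K33 vv unfolding v_def by blast
        then show ?thesis by simp
      next
        case 2
        then have "14 \<le> v" using mo by simp
        then have vv: "v = 14" "2 * e = 3 * v" using F R 2 ve by simp_all
        have "Cub V E 5" using cubic[of] vv nc[of 5] R 2 unfolding v_def e_def
          by unfold_locales auto
        then have "graph_iso V E {0..<14} HeaE" using Hea vv unfolding v_def by blast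
        then show ?thesis by simp
      next
        case 3
        have "8 * R + 2 \<le> v + 2" using pow_bound2[OF 3] mo by linarith
        then show ?thesis using F R ve by simp
      qed
    qed
  qed
qed

end
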